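(* Let $\Omega\subseteq\mathbb{R}^n$ ($n>1$) be a simply connected domain, let $v$ be a scalar-valued function on $\Omega$, and let $\underline{h}$ be a vector-valued solution on $\Omega$ of the Clifford Riccati equation $\partial_{\underline{x}} f + f^2 = v$. Let $\underline{g}$ be a differentiable vector-valued function on $\Omega$. Then the vector-valued function $\underline{f}=\underline{g}+\underline{h}$ is also a solution of $\partial_{\underline{x}} f + f^2 = v$ if and only if $\underline{g}=\dfrac{\partial_{\underline{x}}\phi}{\phi}$ for some nowhere vanishing scalar-valued solution $\phi$ of the equation \[\Delta_n\phi + 2\langle \partial_{\underline{x}}\phi,\underline{h}\rangle = 0 .\]
   Context: $\mathbb{R}_{0,n}$ is the real Clifford algebra generated by an orthonormal basis $e_1,\dots,e_n$ of $\mathbb{R}^n$ with relations $e_je_k+e_ke_j=-2\delta_{jk}$. Vectors are elements $\underline{a}=\sum_j a_je_j$, and $\langle \underline{a},\underline{b}\rangle=\sum_j a_jb_j$. The Dirac operator is $\partial_{\underline{x}}=\sum_{j=1}^n e_j\partial_{x_j}$, acting from the left; $\Delta_n=-\partial_{\underline{x}}^2$ is the Laplacian. *)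

theory Defs
  imports "HOL-Analysis.Analysis"
begin

text \<open>The generators e_j are indexed by a finite
linearly ordered type 'n (so n = CARD('n)); a multivector is a real vector indexed by
the blades, i.e. by the subsets of 'n (basis element e_A = e_{a1}...e_{ak} for
A = {a1 < ... < ak}).\<close>

type_synonym 'n mvec = "(real, 'n set) vec"
type_synonym 'n rvec = "(real, 'n) vec"

definition csign :: "('n::{finite,linorder}) set \<Rightarrow> 'n set \<Rightarrow> real" where
  "csign A B = (-1) ^ (card {(a, b). a \<in> A \<and> b \<in> B \<and> b < a} + card (A \<inter> B))"

text \<open>Clifford product, determined by e_A e_B = csign A B e_{A symdiff B}
(equivalently by e_j e_k + e_k e_j = -2 delta_jk).\<close>
definition cmult :: "('n::{finite,linorder}) mvec \<Rightarrow> 'n mvec \<Rightarrow> 'n mvec" where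
  "cmult x y = (\<chi> C. \<Sum>A\<in>UNIV. \<Sum>B\<in>UNIV.
       (if (A - B) \<union> (B - A) = C then csign A B * (x $ A) * (y $ B) else 0))"

definition cgen :: "'n \<Rightarrow> ('n::finite) mvec" where
  "cgen j = (\<chi> A. if A = {j} then 1 else 0)"

definition csc :: "real \<Rightarrow> ('n::finite) mvec" where
  "csc r = (\<chi> A. if A = {} then r else 0)"

definition cvec :: "'n rvec \<Rightarrow> ('n::finite) mvec" where
  "cvec a = (\<Sum>j\<in>UNIV. (a $ j) *\<^sub>R cgen j)"

definition cscf :: "(('n::finite) rvec \<Rightarrow> real) \<Rightarrow> 'n rvec \<Rightarrow> 'n mvec" where
  "cscf \<phi> y = csc (\<phi> y)"

definition cinner :: "('n::finite) mvec \<Rightarrow> 'n mvec \<Rightarrow> real" where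
  "cinner a b = (\<Sum>j\<in>UNIV. (a $ {j}) * (b $ {j}))"

definition has_partial :: "('n rvec \<Rightarrow> 'a::real_normed_vector) \<Rightarrow> ('n::finite) \<Rightarrow> 'n rvec \<Rightarrow> bool" where
  "has_partial F j x \<longleftrightarrow> (\<lambda>t. F (x + t *\<^sub>R axis j 1)) differentiable (at 0)"

definition cpartial :: "('n rvec \<Rightarrow> 'a::real_normed_vector) \<Rightarrow> ('n::finite) \<Rightarrow> 'n rvec \<Rightarrow> 'a" where
  "cpartial F j x = vector_derivative (\<lambda>t. F (x + t *\<^sub>R axis j 1)) (at 0)"

definition dirac :: "(('n::{finite,linorder}) rvec \<Rightarrow> 'n mvec) \<Rightarrow> 'n rvec \<Rightarrow> 'n mvec" where
  "dirac F x = (\<Sum>j\<in>UNIV. cmult (cgen j) (cpartial F j x))"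

definition riccati_solution :: "(('n::{finite,linorder}) rvec) set \<Rightarrow> ('n rvec \<Rightarrow> real) \<Rightarrow> ('n rvec \<Rightarrow> 'n rvec) \<Rightarrow> bool" where
  "riccati_solution \<Omega> v F \<longleftrightarrow>
     (\<forall>x\<in>\<Omega>. (\<forall>j. has_partial (\<lambda>y. cvec (F y)) j x) \<and>
        dirac (\<lambda>y. cvec (F y)) x + cmult (cvec (F x)) (cvec (F x)) = csc (v x))"

text \<open>Laplacian Delta_n = - d^2, as multivector-valued operator.\<close>
definition claplace :: "(('n::{finite,linorder}) rvec \<Rightarrow> real) \<Rightarrow> 'n rvec \<Rightarrow> 'n mvec" where
  "claplace \<phi> x = - dirac (dirac (cscf \<phi>)) x"

definition aux_solution :: "(('n::{finite,linorder}) rvec) set \<Rightarrow> ('n rvec \<Rightarrow> 'n rvec) \<Rightarrow> ('n rvec \<Rightarrow> real) \<Rightarrow> bool" where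
  "aux_solution \<Omega> h \<phi> \<longleftrightarrow>
     (\<forall>x\<in>\<Omega>. (\<forall>j. has_partial (cscf \<phi>) j x) \<and>
        (\<forall>j. has_partial (dirac (cscf \<phi>)) j x) \<and>
        claplace \<phi> x + csc (2 * cinner (dirac (cscf \<phi>) x) (cvec (h x))) = 0)"

end

theory Submission
  imports Defs
begin

definition segint :: "('a::euclidean_space \<Rightarrow> 'a) \<Rightarrow> 'a \<Rightarrow> 'a \<Rightarrow> real" where
  "segint g a b = integral {0..1} (\<lambda>t. g (a + t *\<^sub>R (b - a)) \<bullet> (b - a))"

lemma segment_param_in:
  fixes a b :: "'a::euclidean_space"
  assumes "t \<in> {0..1}"
  shows "a + t *\<^sub>R (b - a) \<in> closed_segment a b"
  using assms unfolding closed_segment_def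
  by (auto intro!: exI[of _ t] simp: algebra_simps)

lemma continuous_on_seg_integrand:
  fixes g :: "'a::euclidean_space \<Rightarrow> 'a"
  assumes "continuous_on (closed_segment a b) g"
  shows "continuous_on {0..1} (\<lambda>t. g (a + t *\<^sub>R (b - a)) \<bullet> (b - a))"
proof -
  have "continuous_on {0..1} (\<lambda>t. a + t *\<^sub>R (b - a))"
    by (intro continuous_intros)
  moreover have "(\<lambda>t. a + t *\<^sub>R (b - a)) ` {0..1} \<subseteq> closed_segment a b"
    using segment_param_in by blast
  ultimately have "continuous_on {0..1} (g \<circ> (\<lambda>t. a + t *\<^sub>R (b - a)))"
    using continuous_on_compose continuous_on_subset assms by blast
  then show ?thesis
    by (auto intro!: continuous_intros simp: o_def)
qed

lemma seg_ftc:
  fixes g :: "'a::euclidean_space \<Rightarrow> 'a"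
  assumes "\<And>y. y \<in> closed_segment a b \<Longrightarrow>
     (\<Phi> has_derivative (\<lambda>h. g y \<bullet> h)) (at y within closed_segment a b)"
  shows "((\<lambda>t. g (a + t *\<^sub>R (b - a)) \<bullet> (b - a)) has_integral (\<Phi> b - \<Phi> a)) {0..1}"
proof -
  let ?P = "\<lambda>t. a + t *\<^sub>R (b - a)"
  have "((\<Phi> \<circ> ?P) has_vector_derivative (g (?P t) \<bullet> (b - a))) (at t within {0..1})"
    if t: "t \<in> {0..1}" for t
  proof -
    have d1: "(?P has_derivative (\<lambda>s. s *\<^sub>R (b - a))) (at t within {0..1})"
      by (auto intro!: derivative_eq_intros)
    have img: "?P ` {0..1} = closed_segment a b"
      unfolding closed_segment_def by (auto simp: algebra_simps image_def intro!: exI)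
    have d2: "(\<Phi> has_derivative (\<lambda>h. g (?P t) \<bullet> h)) (at (?P t) within ?P ` {0..1})"
      using assms[OF segment_param_in[OF t]] img by simp
    have "((\<Phi> \<circ> ?P) has_derivative ((\<lambda>h. g (?P t) \<bullet> h) \<circ> (\<lambda>s. s *\<^sub>R (b - a)))) (at t within {0..1})"
      by (rule diff_chain_within[OF d1 d2])
    then show ?thesis
      unfolding has_vector_derivative_def by (simp add: o_def)
  qed
  from fundamental_theorem_of_calculus[OF _ this]
  show ?thesis by (simp add: o_def)
qed

lemma seg_param:
  fixes g :: "'a::euclidean_space \<Rightarrow> 'a"
  assumes cont: "continuous_on (closed_segment a b) g"
    and u: "u \<in> {0..1}" and v: "v \<in> {0..1}"
  shows "segint g (a + u *\<^sub>R (b - a)) (a + v *\<^sub>R (b - a)) =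
     integral {0..v} (\<lambda>t. g (a + t *\<^sub>R (b - a)) \<bullet> (b - a)) -
     integral {0..u} (\<lambda>t. g (a + t *\<^sub>R (b - a)) \<bullet> (b - a))"
proof -
  define f where "f = (\<lambda>t. g (a + t *\<^sub>R (b - a)) \<bullet> (b - a))"
  define F where "F = (\<lambda>\<tau>. integral {0..\<tau>} f)"
  have cf: "continuous_on {0..1} f"
    unfolding f_def by (rule continuous_on_seg_integrand[OF cont])
  have dF: "(F has_vector_derivative f \<tau>) (at \<tau> within {0..1})" if "\<tau> \<in> {0..1}" for \<tau>
    unfolding F_def by (rule integral_has_vector_derivative[OF cf that])
  let ?q = "\<lambda>s::real. u + s * (v - u)"
  have qin: "?q s \<in> {0..1}" if "s \<in> {0..1}" for s
  proof -
    have "?q s = (1 - s) * u + s * v" by (simp add: algebra_simps)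
    moreover have "0 \<le> (1 - s) * u + s * v" using that u v by auto
    moreover have "(1 - s) * u + s * v \<le> (1 - s) * 1 + s * 1"
      using that u v by (intro add_mono mult_left_mono) auto
    ultimately show ?thesis by auto
  qed
  have "((F \<circ> ?q) has_vector_derivative ((v - u) *\<^sub>R f (?q s))) (at s within {0..1})"
    if s: "s \<in> {0..1}" for s
  proof (rule vector_diff_chain_within)
    show "(?q has_vector_derivative (v - u)) (at s within {0..1})"
      by (auto intro!: derivative_eq_intros simp: has_real_derivative_iff_has_vector_derivative[symmetric])
    show "(F has_vector_derivative f (?q s)) (at (?q s) within ?q ` {0..1})"
      by (rule has_vector_derivative_within_subset[OF dF[OF qin[OF s]]]) (use qin in auto)
  qed
  from fundamental_theorem_of_calculus[OF _ this]
  have I: "((\<lambda>s. (v - u) * f (?q s)) has_integral (F v - F u)) {0..1}"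
    by (simp add: o_def)
  have eq: "g ((a + u *\<^sub>R (b - a)) + s *\<^sub>R ((a + v *\<^sub>R (b - a)) - (a + u *\<^sub>R (b - a)))) \<bullet>
              ((a + v *\<^sub>R (b - a)) - (a + u *\<^sub>R (b - a))) = (v - u) * f (?q s)" for s
  proof -
    have "(a + u *\<^sub>R (b - a)) + s *\<^sub>R ((a + v *\<^sub>R (b - a)) - (a + u *\<^sub>R (b - a))) = a + ?q s *\<^sub>R (b - a)"
      by (simp add: algebra_simps)
    moreover have "(a + v *\<^sub>R (b - a)) - (a + u *\<^sub>R (b - a)) = (v - u) *\<^sub>R (b - a)"
      by (simp add: algebra_simps)
    ultimately show ?thesis by (simp only: f_def inner_scaleR_right)
  qed
  show ?thesis
    using integral_unique[OF I] unfolding segint_def eq F_def f_def by simp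
qed

lemma seg_midpoint:
  fixes g :: "'a::euclidean_space \<Rightarrow> 'a"
  assumes cont: "continuous_on (closed_segment a b) g"
  shows "segint g a b = segint g a (midpoint a b) + segint g (midpoint a b) b"
proof -
  have e0: "a = a + 0 *\<^sub>R (b - a)" by simp
  have e1: "b = a + 1 *\<^sub>R (b - a)" by simp
  have em: "midpoint a b = a + (1/2) *\<^sub>R (b - a)" by (simp add: midpoint_def algebra_simps flip: scaleR_add_left)
  have "segint g a b = segint g (a + 0 *\<^sub>R (b - a)) (a + 1 *\<^sub>R (b - a))" by simp
  also have "\<dots> = segint g (a + 0 *\<^sub>R (b - a)) (a + (1/2) *\<^sub>R (b - a)) +
      segint g (a + (1/2) *\<^sub>R (b - a)) (a + 1 *\<^sub>R (b - a))"
    using seg_param[OF cont, of 0 1] seg_param[OF cont, of 0 "1/2"] seg_param[OF cont, of "1/2" 1] by simp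
  finally show ?thesis by (simp add: em[symmetric])
qed

lemma seg_reverse:
  fixes g :: "'a::euclidean_space \<Rightarrow> 'a"
  assumes cont: "continuous_on (closed_segment a b) g"
  shows "segint g b a = - segint g a b"
proof -
  have "segint g (a + 1 *\<^sub>R (b - a)) (a + 0 *\<^sub>R (b - a)) = - segint g (a + 0 *\<^sub>R (b - a)) (a + 1 *\<^sub>R (b - a))"
    using seg_param[OF cont, of 0 1] seg_param[OF cont, of 1 0] by simp
  then show ?thesis by simp
qed

lemma seg_const: "segint (\<lambda>y. k) a b = k \<bullet> (b - a)"
  by (simp add: segint_def)

lemma seg_diff:
  fixes g1 g2 :: "'a::euclidean_space \<Rightarrow> 'a"
  assumes "continuous_on (closed_segment a b) g1" "continuous_on (closed_segment a b) g2"
  shows "segint (\<lambda>y. g1 y - g2 y) a b = segint g1 a b - segint g2 a b"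
  unfolding segint_def inner_diff_left
  by (rule integral_diff; rule integrable_continuous_real; rule continuous_on_seg_integrand; fact)

lemma seg_bound:
  fixes g :: "'a::euclidean_space \<Rightarrow> 'a"
  assumes cont: "continuous_on (closed_segment a b) g"
    and B: "\<And>y. y \<in> closed_segment a b \<Longrightarrow> norm (g y) \<le> B" and B0: "0 \<le> B"
  shows "\<bar>segint g a b\<bar> \<le> B * norm (b - a)"
proof -
  have I: "((\<lambda>t. g (a + t *\<^sub>R (b - a)) \<bullet> (b - a)) has_integral segint g a b) (cbox 0 1)"
    unfolding segint_def box_real
    by (rule integrable_integral, rule integrable_continuous_real, rule continuous_on_seg_integrand[OF cont])
  have "norm (segint g a b) \<le> (B * norm (b - a)) * Henstock_Kurzweil_Integration.content (cbox (0::real) 1)"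
  proof (rule has_integral_bound[OF _ I])
    show "0 \<le> B * norm (b - a)" using B0 by simp
    fix t :: real assume "t \<in> cbox 0 1"
    then have "a + t *\<^sub>R (b - a) \<in> closed_segment a b"
      by (intro segment_param_in) auto
    then have "norm (g (a + t *\<^sub>R (b - a))) * norm (b - a) \<le> B * norm (b - a)"
      using B by (intro mult_right_mono) auto
    then show "norm (g (a + t *\<^sub>R (b - a)) \<bullet> (b - a)) \<le> B * norm (b - a)"
      using Cauchy_Schwarz_ineq2[of "g (a + t *\<^sub>R (b - a))" "b - a"] by simp
  qed
  then show ?thesis by simp
qed

lemma seg_affine:
  fixes D :: "'a::euclidean_space \<Rightarrow> 'a"
  assumes lin: "linear D" and sym: "\<And>u w. D u \<bullet> w = D w \<bullet> u"
  shows "segint (\<lambda>y. c + D (y - x)) a b =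
     (c \<bullet> b + (1/2) * (D (b - x) \<bullet> (b - x))) - (c \<bullet> a + (1/2) * (D (a - x) \<bullet> (a - x)))"
proof -
  define \<Phi> where "\<Phi> = (\<lambda>z. c \<bullet> z + (1/2) * (D (z - x) \<bullet> (z - x)))"
  have bl: "bounded_linear D" using lin by (simp add: linear_conv_bounded_linear)
  have "(\<Phi> has_derivative (\<lambda>h. (c + D (y - x)) \<bullet> h)) (at y within closed_segment a b)" for y
  proof -
    have "(\<Phi> has_derivative (\<lambda>h. c \<bullet> h + (1/2) * (D h \<bullet> (y - x) + D (y - x) \<bullet> h))) (at y)"
      unfolding \<Phi>_def
      by (auto intro!: derivative_eq_intros bounded_linear.has_derivative[OF bl])
    moreover have "(\<lambda>h. c \<bullet> h + (1/2) * (D h \<bullet> (y - x) + D (y - x) \<bullet> h)) = (\<lambda>h. (c + D (y - x)) \<bullet> h)"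
      using sym by (auto simp: inner_add_left)
    ultimately show ?thesis by (auto intro: has_derivative_at_withinI)
  qed
  from seg_ftc[of a b \<Phi> "\<lambda>y. c + D (y - x)", OF this]
  show ?thesis unfolding segint_def \<Phi>_def by (simp add: integral_unique)
qed

definition tri :: "('a::euclidean_space \<Rightarrow> 'a) \<Rightarrow> 'a \<Rightarrow> 'a \<Rightarrow> 'a \<Rightarrow> real" where
  "tri g a b c = segint g a b + segint g b c + segint g c a"

lemma cont_seg_hull:
  assumes "continuous_on (convex hull S) g" "x \<in> convex hull S" "y \<in> convex hull S"
  shows "continuous_on (closed_segment x y) g"
  by (rule continuous_on_subset[OF assms(1) closed_segment_subset_convex_hull[OF assms(2,3)]])

lemma abs_sum4_lemma:
  fixes a b c d e :: real
  assumes "e \<le> \<bar>a + b + c + d\<bar>"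
  shows "e / 4 \<le> \<bar>a\<bar> \<or> e / 4 \<le> \<bar>b\<bar> \<or> e / 4 \<le> \<bar>c\<bar> \<or> e / 4 \<le> \<bar>d\<bar>"
  using assms by linarith

lemma tri_quadrisection:
  fixes g :: "'a::euclidean_space \<Rightarrow> 'a"
  assumes f: "continuous_on (convex hull {a,b,c}) g"
      and dist: "dist a b \<le> K" "dist b c \<le> K" "dist c a \<le> K"
      and e: "e * K^2 \<le> \<bar>tri g a b c\<bar>"
  shows "\<exists>a' b' c'.
           a' \<in> convex hull {a,b,c} \<and> b' \<in> convex hull {a,b,c} \<and> c' \<in> convex hull {a,b,c} \<and>
           dist a' b' \<le> K/2  \<and>  dist b' c' \<le> K/2  \<and>  dist c' a' \<le> K/2  \<and>
           e * (K/2)^2 \<le> \<bar>tri g a' b' c'\<bar>"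
         (is "\<exists>x y z. ?\<Phi> x y z")
proof -
  define a' where "a' = midpoint b c"
  define b' where "b' = midpoint c a"
  define c' where "c' = midpoint a b"
  have H: "a \<in> convex hull {a,b,c}" "b \<in> convex hull {a,b,c}" "c \<in> convex hull {a,b,c}"
    by (auto intro: hull_subset[THEN subsetD])
  have H': "a' \<in> convex hull {a,b,c}" "b' \<in> convex hull {a,b,c}" "c' \<in> convex hull {a,b,c}"
    unfolding a'_def b'_def c'_def using H by (auto intro!: midpoints_in_convex_hull)
  note cs = cont_seg_hull[OF f]
  have *: "tri g a b c = tri g a c' b' + tri g a' c' b + tri g a' c b' + tri g a' b' c'"
    unfolding tri_def
    using seg_reverse[OF cs[OF H'(2) H'(3)]] seg_reverse[OF cs[OF H'(1) H'(3)]] seg_reverse[OF cs[OF H'(1) H'(2)]]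
      seg_midpoint[OF cs[OF H(1) H(2)]] seg_midpoint[OF cs[OF H(2) H(3)]] seg_midpoint[OF cs[OF H(3) H(1)]]
    by (simp only: a'_def[symmetric] b'_def[symmetric] c'_def[symmetric])
  have K4: "e * (K/2)^2 = e * K^2 / 4" by (simp add: power_divide)
  have dm: "dist a c' = dist a b / 2" "dist c' b = dist a b / 2"
    "dist b a' = dist b c / 2" "dist a' c = dist b c / 2"
    "dist c b' = dist c a / 2" "dist b' a = dist c a / 2"
    unfolding a'_def b'_def c'_def by (simp_all add: dist_midpoint)
  have dm2: "dist c' b' = dist b c / 2" "dist a' c' = dist c a / 2" "dist b' a' = dist a b / 2"
  proof -
    have "c' - b' = (1/2) *\<^sub>R (b - c)" "a' - c' = (1/2) *\<^sub>R (c - a)" "b' - a' = (1/2) *\<^sub>R (a - b)"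
      unfolding a'_def b'_def c'_def midpoint_def by (simp_all add: algebra_simps)
    then show "dist c' b' = dist b c / 2" "dist a' c' = dist c a / 2" "dist b' a' = dist a b / 2"
      by (simp_all add: dist_norm)
  qed
  have dm3: "dist b' c' = dist b c / 2" "dist c' a' = dist c a / 2" "dist a' b' = dist a b / 2"
    using dm2 by (simp_all add: dist_commute)
  consider "e * K\<^sup>2 / 4 \<le> \<bar>tri g a c' b'\<bar>" | "e * K\<^sup>2 / 4 \<le> \<bar>tri g a' c' b\<bar>" |
           "e * K\<^sup>2 / 4 \<le> \<bar>tri g a' c b'\<bar>" | "e * K\<^sup>2 / 4 \<le> \<bar>tri g a' b' c'\<bar>"
    using abs_sum4_lemma[of "e * K^2"] e unfolding * by blast
  then show ?thesis
  proof cases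
    case 1 then have "?\<Phi> a c' b'" using H H' dist by (simp add: dm dm2 dm3 K4)
    then show ?thesis by blast
  next
    case 2 then have "?\<Phi> a' c' b" using H H' dist by (simp add: dm dm2 dm3 K4)
    then show ?thesis by blast
  next
    case 3 then have "?\<Phi> a' c b'" using H H' dist by (simp add: dm dm2 dm3 K4)
    then show ?thesis by blast
  next
    case 4 then have "?\<Phi> a' b' c'" using H H' dist by (simp add: dm dm2 dm3 K4)
    then show ?thesis by blast
  qed
qed

lemma triangle_points_closer':
  fixes a :: "'a::euclidean_space"
  shows "\<lbrakk>x \<in> convex hull {a,b,c};  y \<in> convex hull {a,b,c}\<rbrakk>
         \<Longrightarrow> norm(x - y) \<le> norm(a - b) \<or>
             norm(x - y) \<le> norm(b - c) \<or>
             norm(x - y) \<le> norm(c - a)"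
  using simplex_extremal_le [of "{a,b,c}"]
  by (auto simp: norm_minus_commute)

lemma tri_affine:
  fixes D :: "'a::euclidean_space \<Rightarrow> 'a"
  assumes lin: "linear D" and sym: "\<And>u w. D u \<bullet> w = D w \<bullet> u"
  shows "tri (\<lambda>y. c + D (y - x)) a b p = 0"
  unfolding tri_def seg_affine[OF lin sym] by simp

lemma small_triangle:
  fixes g :: "'a::euclidean_space \<Rightarrow> 'a"
  assumes x: "x \<in> S" and cont: "continuous_on S g"
    and der: "(g has_derivative D) (at x within S)" and sym: "\<And>u w. D u \<bullet> w = D w \<bullet> u"
    and e: "0 < e"
  shows "\<exists>k>0. \<forall>a b c. dist a b \<le> k \<and> dist b c \<le> k \<and> dist c a \<le> k \<and>
              x \<in> convex hull {a,b,c} \<and> convex hull {a,b,c} \<subseteq> S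
              \<longrightarrow> \<bar>tri g a b c\<bar> \<le> e*(dist a b + dist b c + dist c a)^2"
proof -
  have bl: "bounded_linear D" and lin: "linear D"
    using der by (auto simp: has_derivative_within_alt bounded_linear.linear)
  obtain d where d: "d > 0" and dd: "\<And>y. y \<in> S \<Longrightarrow> norm (y - x) < d \<Longrightarrow>
      norm (g y - g x - D (y - x)) \<le> e * norm (y - x)"
    using der e unfolding has_derivative_within_alt by meson
  define A where "A = (\<lambda>y. g x + D (y - x))"
  have contA: "continuous_on T A" for T
    unfolding A_def by (intro continuous_intros bounded_linear.continuous_on[OF bl])
  show ?thesis
  proof (intro exI[of _ "d/2"] conjI allI impI)
    show "0 < d/2" using d by simp
    fix a b c
    assume H: "dist a b \<le> d/2 \<and> dist b c \<le> d/2 \<and> dist c a \<le> d/2 \<and>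
              x \<in> convex hull {a,b,c} \<and> convex hull {a,b,c} \<subseteq> S"
    then have xh: "x \<in> convex hull {a,b,c}" and hS: "convex hull {a,b,c} \<subseteq> S" by auto
    have Hp: "a \<in> convex hull {a,b,c}" "b \<in> convex hull {a,b,c}" "c \<in> convex hull {a,b,c}"
      by (auto intro: hull_subset[THEN subsetD])
    have cg: "continuous_on (convex hull {a,b,c}) g" using cont hS continuous_on_subset by blast
    define P where "P = dist a b + dist b c + dist c a"
    have P0: "0 \<le> P" unfolding P_def by simp
    have close: "norm (y - x) \<le> P" "norm (y - x) < d" if "y \<in> convex hull {a,b,c}" for y
    proof -
      have "norm (y - x) \<le> norm (a - b) \<or> norm (y - x) \<le> norm (b - c) \<or> norm (y - x) \<le> norm (c - a)"
        by (rule triangle_points_closer'[OF that xh])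
      then show "norm (y - x) \<le> P" "norm (y - x) < d"
        using H d norm_ge_zero[of "a-b"] norm_ge_zero[of "b-c"] norm_ge_zero[of "c-a"]
        unfolding P_def dist_norm by linarith+
    qed
    have bnd: "norm (g y - A y) \<le> e * P" if "y \<in> convex hull {a,b,c}" for y
    proof -
      have "norm (g y - A y) \<le> e * norm (y - x)"
        using dd[OF _ close(2)[OF that]] that hS unfolding A_def by (auto simp: algebra_simps)
      also have "\<dots> \<le> e * P" using close(1)[OF that] e by simp
      finally show ?thesis .
    qed
    have sb: "\<bar>segint (\<lambda>y. g y - A y) u v\<bar> \<le> (e * P) * norm (v - u)"
      if "u \<in> convex hull {a,b,c}" "v \<in> convex hull {a,b,c}" for u v
    proof (rule seg_bound)
      show "continuous_on (closed_segment u v) (\<lambda>y. g y - A y)"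
        using cont_seg_hull[OF cg that] contA by (intro continuous_intros)
      show "norm (g y - A y) \<le> e * P" if "y \<in> closed_segment u v" for y
        using bnd closed_segment_subset_convex_hull[OF \<open>u \<in> _\<close> \<open>v \<in> _\<close>] that by blast
      show "0 \<le> e * P" using e P0 by simp
    qed
    have "tri g a b c = tri (\<lambda>y. g y - A y) a b c + tri A a b c"
      unfolding tri_def
      using seg_diff[OF cont_seg_hull[OF cg Hp(1) Hp(2)] contA]
        seg_diff[OF cont_seg_hull[OF cg Hp(2) Hp(3)] contA]
        seg_diff[OF cont_seg_hull[OF cg Hp(3) Hp(1)] contA] by simp
    also have "tri A a b c = 0" unfolding A_def by (rule tri_affine[OF lin sym])
    finally have "\<bar>tri g a b c\<bar> \<le> (e*P) * norm (b - a) + (e*P) * norm (c - b) + (e*P) * norm (a - c)"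
      unfolding tri_def using sb[OF Hp(1) Hp(2)] sb[OF Hp(2) Hp(3)] sb[OF Hp(3) Hp(1)] by linarith
    also have "\<dots> = e * P^2"
      unfolding P_def dist_norm by (simp add: norm_minus_commute power2_eq_square algebra_simps)
    finally show "\<bar>tri g a b c\<bar> \<le> e*(dist a b + dist b c + dist c a)^2" unfolding P_def .
  qed
qed

locale TChain =
  fixes x0 At Follows
  assumes At0: "At x0 0"
      and AtSuc: "\<And>x n. At x n \<Longrightarrow> \<exists>x'. At x' (Suc n) \<and> Follows x' x"
begin
  primrec f where
    "f 0 = x0"
  | "f (Suc n) = (SOME x. At x (Suc n) \<and> Follows x (f n))"

  lemma At: "At (f n) n"
  proof (induct n)
    case 0 show ?case
      by (simp add: At0)
  next
    case (Suc n) show ?case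
      by (metis (no_types, lifting) AtSuc [OF Suc] f.simps(2) someI_ex)
  qed

  lemma Follows: "Follows (f(Suc n)) (f n)"
    by (metis (no_types, lifting) AtSuc [OF At [of n]] f.simps(2) someI_ex)

  declare f.simps(2) [simp del]
end

lemma TChain3:
  assumes At0: "At x0 y0 z0 0"
      and AtSuc: "\<And>x y z n. At x y z n \<Longrightarrow> \<exists>x' y' z'. At x' y' z' (Suc n) \<and> Follows x' y' z' x y z"
  obtains f g h where
    "f 0 = x0" "g 0 = y0" "h 0 = z0"
                      "\<And>n. At (f n) (g n) (h n) n"
                       "\<And>n. Follows (f(Suc n)) (g(Suc n)) (h(Suc n)) (f n) (g n) (h n)"
proof -
  interpret three: TChain "(x0,y0,z0)" "\<lambda>(x,y,z). At x y z" "\<lambda>(x',y',z'). \<lambda>(x,y,z). Follows x' y' z' x y z"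
  proof qed (use At0 AtSuc in auto)
  show ?thesis
  proof
    show "\<And>n. Follows (fst (three.f (Suc n))) (fst (snd (three.f (Suc n))))
                      (snd (snd (three.f (Suc n)))) (fst (three.f n))
                     (fst (snd (three.f n))) (snd (snd (three.f n)))"
         "\<And>n. At (fst (three.f n)) (fst (snd (three.f n))) (snd (snd (three.f n))) n"
      using three.At three.Follows
      by (simp_all add: split_beta')
  qed auto
qed

lemma goursat:
  fixes g :: "'a::euclidean_space \<Rightarrow> 'a"
  assumes contf: "continuous_on (convex hull {a,b,c}) g"
    and der: "\<And>x. x \<in> convex hull {a,b,c} \<Longrightarrow>
       \<exists>D. (g has_derivative D) (at x within convex hull {a,b,c}) \<and> (\<forall>u w. D u \<bullet> w = D w \<bullet> u)"
  shows "tri g a b c = 0"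
proof (rule ccontr)
  assume ynz: "tri g a b c \<noteq> 0"
  define K where "K = 1 + max (dist a b) (max (dist b c) (dist c a))"
  define e where "e = \<bar>tri g a b c\<bar> / K^2"
  have K1: "K \<ge> 1"  by (simp add: K_def max.coboundedI1)
  then have K: "K > 0" by linarith
  have [iff]: "dist a b \<le> K" "dist b c \<le> K" "dist c a \<le> K"
    by (simp_all add: K_def)
  have e: "e > 0"
    unfolding e_def using ynz K1 by simp
  define At where "At x y z n \<longleftrightarrow>
      convex hull {x,y,z} \<subseteq> convex hull {a,b,c} \<and>
      dist x y \<le> K/2^n \<and> dist y z \<le> K/2^n \<and> dist z x \<le> K/2^n \<and>
      \<bar>tri g x y z\<bar> \<ge> e*(K/2^n)^2"
    for x y z n
  have At0: "At a b c 0"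
    using K by (simp add: At_def e_def)
  { fix x y z n
    assume At: "At x y z n"
    then have contf': "continuous_on (convex hull {x,y,z}) g"
      using contf At_def continuous_on_subset by metis
    have "\<exists>x' y' z'. At x' y' z' (Suc n) \<and> convex hull {x',y',z'} \<subseteq> convex hull {x,y,z}"
      using At tri_quadrisection [OF contf', of "K/2^n" e]
      apply (simp add: At_def algebra_simps)
      apply (meson convex_hull_subset empty_subsetI insert_subset subsetCE)
      done
  } note AtSuc = this
  obtain fa fb fc
    where f0 [simp]: "fa 0 = a" "fb 0 = b" "fc 0 = c"
      and cosb: "\<And>n. convex hull {fa n, fb n, fc n} \<subseteq> convex hull {a,b,c}"
      and dist: "\<And>n. dist (fa n) (fb n) \<le> K/2^n"
                "\<And>n. dist (fb n) (fc n) \<le> K/2^n"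
                "\<And>n. dist (fc n) (fa n) \<le> K/2^n"
      and no: "\<And>n. \<bar>tri g (fa n) (fb n) (fc n)\<bar> \<ge> e * (K/2^n)^2"
      and conv_le: "\<And>n. convex hull {fa(Suc n), fb(Suc n), fc(Suc n)} \<subseteq> convex hull {fa n, fb n, fc n}"
    by (rule TChain3 [of At, OF At0 AtSuc]) (auto simp: At_def)
  obtain x where x: "\<And>n. x \<in> convex hull {fa n, fb n, fc n}"
  proof (rule bounded_closed_nest)
    show "\<And>n. closed (convex hull {fa n, fb n, fc n})"
      by (simp add: compact_imp_closed finite_imp_compact_convex_hull)
    show "\<And>m n. m \<le> n \<Longrightarrow> convex hull {fa n, fb n, fc n} \<subseteq> convex hull {fa m, fb m, fc m}"
      by (erule transitive_stepwise_le) (auto simp: conv_le)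
  qed (fastforce intro: finite_imp_bounded_convex_hull)+
  then have xin: "x \<in> convex hull {a,b,c}"
    using f0 by blast
  obtain D where fx: "(g has_derivative D) (at x within convex hull {a,b,c})"
    and sym: "\<And>u w. D u \<bullet> w = D w \<bullet> u"
    using der[OF xin] by blast
  obtain k where k: "0 < k" and le: "\<And>x' y' z'.
             \<lbrakk>dist x' y' \<le> k; dist y' z' \<le> k; dist z' x' \<le> k;
              x \<in> convex hull {x',y',z'};
              convex hull {x',y',z'} \<subseteq> convex hull {a,b,c}\<rbrakk>
             \<Longrightarrow>
             \<bar>tri g x' y' z'\<bar> \<le> (e/10) * (dist x' y' + dist y' z' + dist z' x')\<^sup>2"
    using small_triangle[OF xin contf fx sym, of "e/10"] e by auto
  obtain n where Kk: "K / k < 2 ^ n"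
    using real_arch_pow[of 2 "K/k"] by auto
  have "K / 2 ^ n < k" using Kk k
    by (auto simp: field_simps)
  then have DD: "dist (fa n) (fb n) \<le> k" "dist (fb n) (fc n) \<le> k" "dist (fc n) (fa n) \<le> k"
    using dist [of n]  k
    by linarith+
  have dle: "(dist (fa n) (fb n) + dist (fb n) (fc n) + dist (fc n) (fa n))\<^sup>2
             \<le> (3 * K / 2 ^ n)\<^sup>2"
    using dist [of n] e K
    by (simp add: abs_le_square_iff [symmetric])
  have "(e/10) * (dist (fa n) (fb n) + dist (fb n) (fc n) + dist (fc n) (fa n))\<^sup>2 \<le> (e/10) * (3 * K / 2 ^ n)\<^sup>2"
    using dle e mult_le_cancel_left_pos by (metis divide_pos_pos zero_less_numeral)
  also have "\<dots> < e * (K/2^n)^2"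
    using e K by (simp add: field_simps power_divide)
  also have "\<dots> \<le> \<bar>tri g (fa n) (fb n) (fc n)\<bar>" by (rule no)
  finally show False
    using le [OF DD x cosb] by auto
qed

definition potential :: "('a::euclidean_space \<Rightarrow> 'a) \<Rightarrow> ('a \<Rightarrow> real) \<Rightarrow> 'a set \<Rightarrow> bool" where
  "potential g \<psi> B \<longleftrightarrow> (\<forall>y\<in>B. (\<psi> has_derivative (\<lambda>h. g y \<bullet> h)) (at y))"

definition symder :: "('a::euclidean_space \<Rightarrow> 'a) \<Rightarrow> 'a set \<Rightarrow> bool" where
  "symder g S \<longleftrightarrow> (\<forall>x\<in>S. \<exists>D. (g has_derivative D) (at x) \<and> (\<forall>u w. D u \<bullet> w = D w \<bullet> u))"

lemma symder_cont: "symder g S \<Longrightarrow> continuous_on S g"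
  unfolding symder_def
  by (meson continuous_at_imp_continuous_on has_derivative_continuous)

lemma convex_potential:
  fixes g :: "'a::euclidean_space \<Rightarrow> 'a"
  assumes S: "open S" "convex S" and c0: "c0 \<in> S" and sd: "symder g S"
  shows "potential g (\<lambda>y. segint g c0 y) S"
  unfolding potential_def
proof
  fix x assume x: "x \<in> S"
  have cont: "continuous_on S g" by (rule symder_cont[OF sd])
  have hull: "convex hull {p, q, r} \<subseteq> S" if "p \<in> S" "q \<in> S" "r \<in> S" for p q r
    using that S(2) by (simp add: hull_minimal)
  have diff: "segint g c0 y - segint g c0 x = segint g x y" if y: "y \<in> S" for y
  proof -
    have H: "convex hull {c0, x, y} \<subseteq> S" using hull[OF c0 x y] .
    have "tri g c0 x y = 0"
    proof (rule goursat)
      show "continuous_on (convex hull {c0, x, y}) g" using cont H continuous_on_subset by blast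
      fix z assume "z \<in> convex hull {c0, x, y}"
      then have "z \<in> S" using H by blast
      then obtain D where "(g has_derivative D) (at z)" "\<forall>u w. D u \<bullet> w = D w \<bullet> u"
        using sd unfolding symder_def by blast
      then show "\<exists>D. (g has_derivative D) (at z within convex hull {c0, x, y}) \<and> (\<forall>u w. D u \<bullet> w = D w \<bullet> u)"
        by (blast intro: has_derivative_at_withinI)
    qed
    moreover have "segint g y c0 = - segint g c0 y"
      by (rule seg_reverse) (use cont closed_segment_subset[OF c0 y S(2)] continuous_on_subset in blast)
    ultimately show ?thesis unfolding tri_def by linarith
  qed
  show "((\<lambda>y. segint g c0 y) has_derivative (\<lambda>h. g x \<bullet> h)) (at x)"
    unfolding has_derivative_at_alt
  proof (intro conjI allI impI)
    show "bounded_linear (\<lambda>h. g x \<bullet> h)" by (rule bounded_linear_inner_right)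
    fix e :: real assume e: "0 < e"
    obtain r where r: "r > 0" "ball x r \<subseteq> S" using S(1) x openE by blast
    obtain d' where d': "d' > 0" "\<And>z. z \<in> S \<Longrightarrow> dist z x < d' \<Longrightarrow> dist (g z) (g x) \<le> e"
      using cont x e unfolding continuous_on_iff by (metis less_le)
    show "\<exists>d>0. \<forall>y. norm (y - x) < d \<longrightarrow>
        norm (segint g c0 y - segint g c0 x - g x \<bullet> (y - x)) \<le> e * norm (y - x)"
    proof (intro exI[of _ "min r d'"] conjI allI impI)
      show "0 < min r d'" using r d' by simp
      fix y assume y: "norm (y - x) < min r d'"
      then have yS: "y \<in> S" using r by (auto simp: dist_norm norm_minus_commute)
      have seg: "closed_segment x y \<subseteq> S" using closed_segment_subset[OF x yS S(2)] .
      have cseg: "continuous_on (closed_segment x y) g" using cont seg continuous_on_subset by blast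
      have "segint g c0 y - segint g c0 x - g x \<bullet> (y - x) = segint (\<lambda>z. g z - g x) x y"
        using diff[OF yS] seg_diff[OF cseg continuous_on_const] seg_const[of "g x" x y] by simp
      also have "\<bar>\<dots>\<bar> \<le> e * norm (y - x)"
      proof (rule seg_bound)
        show "continuous_on (closed_segment x y) (\<lambda>z. g z - g x)"
          using cseg by (intro continuous_intros)
        show "0 \<le> e" using e by simp
        fix z assume z: "z \<in> closed_segment x y"
        have "dist z x \<le> dist x y" using segment_bound(1)[OF z] by (simp add: dist_norm norm_minus_commute)
        then have "dist z x < d'" using y by (simp add: dist_norm norm_minus_commute)
        then show "norm (g z - g x) \<le> e" using d'(2)[of z] z seg by (auto simp: dist_norm)
      qed
      finally show "norm (segint g c0 y - segint g c0 x - g x \<bullet> (y - x)) \<le> e * norm (y - x)" by simp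
    qed
  qed
qed
lemma potential_subset: "potential g \<psi> B \<Longrightarrow> B' \<subseteq> B \<Longrightarrow> potential g \<psi> B'"
  unfolding potential_def by blast

lemma potential_unique:
  assumes "potential g \<psi>1 B" "potential g \<psi>2 B" "open B" "connected B" "y \<in> B" "z \<in> B"
  shows "\<psi>1 y - \<psi>2 y = \<psi>1 z - \<psi>2 z"
proof (rule has_derivative_zero_unique_connected[OF assms(3,4) _ assms(5,6), of "\<lambda>x. \<psi>1 x - \<psi>2 x"])
  fix x assume "x \<in> B"
  then have "((\<lambda>x. \<psi>1 x - \<psi>2 x) has_derivative (\<lambda>h. g x \<bullet> h - g x \<bullet> h)) (at x)"
    using assms(1,2) unfolding potential_def by (intro has_derivative_diff) auto
  then show "((\<lambda>x. \<psi>1 x - \<psi>2 x) has_derivative (\<lambda>x. 0)) (at x)" by simp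
qed

lemma potential_unique_balls:
  assumes "potential g \<psi>1 (ball c1 r1)" "potential g \<psi>2 (ball c2 r2)"
    "y \<in> ball c1 r1" "y \<in> ball c2 r2" "z \<in> ball c1 r1" "z \<in> ball c2 r2"
  shows "\<psi>1 y - \<psi>2 y = \<psi>1 z - \<psi>2 z"
proof (rule potential_unique)
  show "potential g \<psi>1 (ball c1 r1 \<inter> ball c2 r2)" "potential g \<psi>2 (ball c1 r1 \<inter> ball c2 r2)"
    using assms(1,2) potential_subset by blast+
  show "open (ball c1 r1 \<inter> ball c2 r2)" by auto
  show "connected (ball c1 r1 \<inter> ball c2 r2)" by (intro convex_connected convex_Int) auto
qed (use assms in auto)

lemma loc_const_interval:
  fixes f :: "real \<Rightarrow> real"
  assumes "\<And>t. t \<in> {0..1} \<Longrightarrow> \<exists>e>0. \<forall>s\<in>{0..1}. \<bar>s - t\<bar> < e \<longrightarrow> f s = f t"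
    and "a \<in> {0..1}" "b \<in> {0..1}"
  shows "f a = f b"
proof (rule connected_local_const[OF connected_Icc assms(2,3)])
  show "\<forall>a\<in>{0..1}. eventually (\<lambda>b. f a = f b) (at a within {0..1})"
  proof
    fix t assume "t \<in> {0..1::real}"
    then obtain e where "e > 0" "\<forall>s\<in>{0..1}. \<bar>s - t\<bar> < e \<longrightarrow> f s = f t" using assms(1) by blast
    then show "eventually (\<lambda>b. f t = f b) (at t within {0..1})"
      unfolding eventually_at by (auto simp: dist_real_def intro!: exI[of _ e])
  qed
qed

lemma step_chain:
  assumes d: "d > 0" and P0: "P 0"
    and step: "\<And>s s'. s \<in> {0..1} \<Longrightarrow> s' \<in> {0..1} \<Longrightarrow> \<bar>s - s'\<bar> < d \<Longrightarrow> P s \<Longrightarrow> P s'"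
  shows "P (1::real)"
proof -
  have "P (min 1 (real n * (d/2)))" for n
  proof (induction n)
    case 0 then show ?case using P0 by simp
  next
    case (Suc n)
    show ?case
    proof (rule step[OF _ _ _ Suc])
      show "min 1 (real n * (d / 2)) \<in> {0..1}" "min 1 (real (Suc n) * (d / 2)) \<in> {0..1}"
        using d by auto
      show "\<bar>min 1 (real n * (d / 2)) - min 1 (real (Suc n) * (d / 2))\<bar> < d"
        using d by (auto simp: min_def algebra_simps)
    qed
  qed
  moreover obtain n where "1 \<le> real n * (d/2)"
    using real_arch_simple[of "2/d"] d by (auto simp: field_simps)
  ultimately show ?thesis by (metis min.absorb1)
qed

lemma compact_margin:
  fixes K :: "'a::euclidean_space set"
  assumes "compact K" "open \<Omega>" "K \<subseteq> \<Omega>"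
  obtains \<epsilon> where "\<epsilon> > 0" "\<And>y. y \<in> K \<Longrightarrow> ball y (2*\<epsilon>) \<subseteq> \<Omega>"
proof -
  obtain \<delta> where d: "\<delta> > 0" "\<And>x y. x \<in> K \<Longrightarrow> y \<in> - \<Omega> \<Longrightarrow> \<delta> \<le> dist x y"
    using separate_compact_closed[of K "-\<Omega>"] assms by force
  show ?thesis
  proof (rule that[of "\<delta>/2"])
    show "\<delta>/2 > 0" using d by simp
    fix y assume "y \<in> K"
    then show "ball y (2 * (\<delta> / 2)) \<subseteq> \<Omega>" using d by (force simp: subset_iff)
  qed
qed

locale closed_form =
  fixes \<Omega> :: "'a::euclidean_space set" and g :: "'a \<Rightarrow> 'a"
  assumes op: "open \<Omega>" and sd: "symder g \<Omega>"
begin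

lemma pot_ball:
  assumes "ball c r \<subseteq> \<Omega>"
  obtains \<psi> where "potential g \<psi> (ball c r)"
proof (cases "r > 0")
  case True
  have "symder g (ball c r)" using sd assms unfolding symder_def by blast
  from convex_potential[OF open_ball convex_ball _ this, of c] True that show ?thesis by auto
next
  case False
  then have "ball c r = {}" by simp
  then show ?thesis by (intro that[of "\<lambda>_. 0"]) (simp add: potential_def \<open>ball c r = {}\<close>)
qed

definition lift :: "(real \<Rightarrow> 'a) \<Rightarrow> (real \<Rightarrow> real) \<Rightarrow> bool" where
  "lift \<gamma> L \<longleftrightarrow> (\<forall>t\<in>{0..1}. \<exists>c r \<psi> e. ball c r \<subseteq> \<Omega> \<and> potential g \<psi> (ball c r) \<and> e > 0 \<and>
      (\<forall>s\<in>{0..1}. \<bar>s - t\<bar> < e \<longrightarrow> \<gamma> s \<in> ball c r \<and> L s - \<psi> (\<gamma> s) = L t - \<psi> (\<gamma> t)))"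

lemma lift_any:
  assumes L: "lift \<gamma> L" and t: "t \<in> {0..1}" and cont: "continuous_on {0..1} \<gamma>"
    and B: "ball c r \<subseteq> \<Omega>" "potential g \<psi> (ball c r)" "\<gamma> t \<in> ball c r"
  shows "\<exists>e>0. \<forall>s\<in>{0..1}. \<bar>s - t\<bar> < e \<longrightarrow> \<gamma> s \<in> ball c r \<and> L s - \<psi> (\<gamma> s) = L t - \<psi> (\<gamma> t)"
proof -
  obtain c1 r1 \<psi>1 e1 where 1: "ball c1 r1 \<subseteq> \<Omega>" "potential g \<psi>1 (ball c1 r1)" "e1 > 0"
    "\<And>s. s \<in> {0..1} \<Longrightarrow> \<bar>s - t\<bar> < e1 \<Longrightarrow> \<gamma> s \<in> ball c1 r1 \<and> L s - \<psi>1 (\<gamma> s) = L t - \<psi>1 (\<gamma> t)"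
    using L t unfolding lift_def by blast
  have gt1: "\<gamma> t \<in> ball c1 r1" using 1(4)[of t] 1(3) t by simp
  obtain e2 where e2: "e2 > 0" "\<And>s. s \<in> {0..1} \<Longrightarrow> dist s t < e2 \<Longrightarrow> dist (\<gamma> s) (\<gamma> t) < r - dist c (\<gamma> t)"
    using cont t B(3) unfolding continuous_on_iff by (metis dist_commute mem_ball diff_gt_0_iff_gt)
  show ?thesis
  proof (intro exI[of _ "min e1 e2"] conjI ballI impI)
    show "0 < min e1 e2" using 1(3) e2(1) by simp
    fix s assume s: "s \<in> {0..1}" "\<bar>s - t\<bar> < min e1 e2"
    have "dist (\<gamma> s) (\<gamma> t) < r - dist c (\<gamma> t)" using e2(2)[of s] s by (simp add: dist_real_def)
    then show gs: "\<gamma> s \<in> ball c r" by (simp add: dist_commute) (metis dist_triangle add.commute le_less_trans less_diff_eq dist_commute)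
    have gs1: "\<gamma> s \<in> ball c1 r1" and eq: "L s - \<psi>1 (\<gamma> s) = L t - \<psi>1 (\<gamma> t)" using 1(4)[of s] s by auto
    have "\<psi>1 (\<gamma> s) - \<psi> (\<gamma> s) = \<psi>1 (\<gamma> t) - \<psi> (\<gamma> t)"
      by (rule potential_unique_balls[OF 1(2) B(2) gs1 gs gt1 B(3)])
    then show "L s - \<psi> (\<gamma> s) = L t - \<psi> (\<gamma> t)" using eq by linarith
  qed
qed

lemma lift_unique:
  assumes L1: "lift \<gamma> L1" and L2: "lift \<gamma> L2" and cont: "continuous_on {0..1} \<gamma>"
    and eq0: "L1 0 = L2 0" and t: "t \<in> {0..1}"
  shows "L1 t = L2 t"
proof -
  have "(\<lambda>s. L1 s - L2 s) 0 = (\<lambda>s. L1 s - L2 s) t"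
  proof (rule loc_const_interval[of "\<lambda>s. L1 s - L2 s"])
    fix t :: real assume t: "t \<in> {0..1}"
    obtain c r \<psi> e where 1: "ball c r \<subseteq> \<Omega>" "potential g \<psi> (ball c r)" "e > 0"
      "\<And>s. s \<in> {0..1} \<Longrightarrow> \<bar>s - t\<bar> < e \<Longrightarrow> \<gamma> s \<in> ball c r \<and> L1 s - \<psi> (\<gamma> s) = L1 t - \<psi> (\<gamma> t)"
      using L1 t unfolding lift_def by blast
    have "\<gamma> t \<in> ball c r" using 1(4)[of t] 1(3) t by simp
    from lift_any[OF L2 t cont 1(1,2) this] obtain e2 where e2: "e2 > 0"
      "\<And>s. s \<in> {0..1} \<Longrightarrow> \<bar>s - t\<bar> < e2 \<Longrightarrow> L2 s - \<psi> (\<gamma> s) = L2 t - \<psi> (\<gamma> t)" by blast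
    show "\<exists>e>0. \<forall>s\<in>{0..1}. \<bar>s - t\<bar> < e \<longrightarrow> (\<lambda>s. L1 s - L2 s) s = (\<lambda>s. L1 s - L2 s) t"
      using 1(3,4) e2 by (intro exI[of _ "min e e2"]) force
  qed (use t in auto)
  then show ?thesis using eq0 by simp
qed

end


context closed_form
begin

lemma lift_nearby:
  assumes cg: "continuous_on {0..1} \<gamma>" and \<epsilon>: "\<epsilon> > 0"
    and inO: "\<And>t. t \<in> {0..1} \<Longrightarrow> ball (\<gamma> t) (2*\<epsilon>) \<subseteq> \<Omega>"
    and close: "\<And>t. t \<in> {0..1} \<Longrightarrow> dist (\<eta> t) (\<gamma> t) < \<epsilon>"
    and L: "lift \<gamma> L"
  shows "\<exists>M. lift \<eta> M \<and> (\<forall>t\<in>{0..1}. \<forall>\<psi>. potential g \<psi> (ball (\<gamma> t) (2*\<epsilon>)) \<longrightarrow>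
            M t = L t + \<psi> (\<eta> t) - \<psi> (\<gamma> t))"
proof -
  define \<Psi> where "\<Psi> t = (SOME \<psi>. potential g \<psi> (ball (\<gamma> t) (2*\<epsilon>)))" for t
  have \<Psi>: "potential g (\<Psi> t) (ball (\<gamma> t) (2*\<epsilon>))" if "t \<in> {0..1}" for t
    unfolding \<Psi>_def using pot_ball[OF inO[OF that]] by (metis someI_ex)
  have inb: "\<eta> t \<in> ball (\<gamma> t) (2*\<epsilon>)" "\<gamma> t \<in> ball (\<gamma> t) (2*\<epsilon>)" if "t \<in> {0..1}" for t
    using close[OF that] \<epsilon> by (auto simp: dist_commute)
  define M where "M t = L t + \<Psi> t (\<eta> t) - \<Psi> t (\<gamma> t)" for t
  have indep: "M t = L t + \<psi> (\<eta> t) - \<psi> (\<gamma> t)"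
    if t: "t \<in> {0..1}" and \<psi>: "potential g \<psi> (ball (\<gamma> t) (2*\<epsilon>))" for t \<psi>
    using potential_unique_balls[OF \<psi> \<Psi>[OF t] inb(1)[OF t] inb(1)[OF t] inb(2)[OF t] inb(2)[OF t]]
    unfolding M_def by linarith
  have "lift \<eta> M"
    unfolding lift_def
  proof
    fix t :: real assume t: "t \<in> {0..1}"
    obtain e1 where e1: "e1 > 0" "\<And>s. s \<in> {0..1} \<Longrightarrow> \<bar>s - t\<bar> < e1 \<Longrightarrow>
        \<gamma> s \<in> ball (\<gamma> t) (2*\<epsilon>) \<and> L s - \<Psi> t (\<gamma> s) = L t - \<Psi> t (\<gamma> t)"
      using lift_any[OF L t cg inO[OF t] \<Psi>[OF t] inb(2)[OF t]] by blast
    obtain e2 where e2: "e2 > 0" "\<And>s. s \<in> {0..1} \<Longrightarrow> dist s t < e2 \<Longrightarrow> dist (\<gamma> s) (\<gamma> t) < \<epsilon>"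
      using cg t \<epsilon> unfolding continuous_on_iff by metis
    show "\<exists>c r \<psi> e. ball c r \<subseteq> \<Omega> \<and> potential g \<psi> (ball c r) \<and> e > 0 \<and>
      (\<forall>s\<in>{0..1}. \<bar>s - t\<bar> < e \<longrightarrow> \<eta> s \<in> ball c r \<and> M s - \<psi> (\<eta> s) = M t - \<psi> (\<eta> t))"
    proof (intro exI conjI ballI impI)
      show "ball (\<gamma> t) (2*\<epsilon>) \<subseteq> \<Omega>" by (rule inO[OF t])
      show "potential g (\<Psi> t) (ball (\<gamma> t) (2*\<epsilon>))" by (rule \<Psi>[OF t])
      show "0 < min e1 e2" using e1 e2 by simp
      fix s assume s: "s \<in> {0..1}" "\<bar>s - t\<bar> < min e1 e2"
      have d1: "dist (\<gamma> s) (\<gamma> t) < \<epsilon>" using e2(2)[of s] s by (simp add: dist_real_def)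
      have d2: "dist (\<eta> s) (\<gamma> s) < \<epsilon>" using close[OF s(1)] .
      show es: "\<eta> s \<in> ball (\<gamma> t) (2*\<epsilon>)"
        using d1 d2 dist_triangle[of "\<gamma> t" "\<eta> s" "\<gamma> s"] by (simp add: dist_commute)
      have gs: "\<gamma> s \<in> ball (\<gamma> t) (2*\<epsilon>)" using d1 \<epsilon> by (simp add: dist_commute)
      have eq1: "L s - \<Psi> t (\<gamma> s) = L t - \<Psi> t (\<gamma> t)" using e1(2)[of s] s by auto
      have eq2: "\<Psi> s (\<eta> s) - \<Psi> t (\<eta> s) = \<Psi> s (\<gamma> s) - \<Psi> t (\<gamma> s)"
        by (rule potential_unique_balls[OF \<Psi>[OF s(1)] \<Psi>[OF t] inb(1)[OF s(1)] es inb(2)[OF s(1)] gs])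
      show "M s - \<Psi> t (\<eta> s) = M t - \<Psi> t (\<eta> t)"
        unfolding M_def using eq1 eq2 by linarith
    qed
  qed
  then show ?thesis using indep by blast
qed

lemma lift_exists:
  assumes p: "path \<gamma>" "path_image \<gamma> \<subseteq> \<Omega>"
  shows "\<exists>L. lift \<gamma> L \<and> L 0 = v"
proof -
  have cg: "continuous_on {0..1} \<gamma>" using p unfolding path_def by simp
  have K: "compact (\<gamma> ` {0..1})" using cg by (intro compact_continuous_image) auto
  obtain \<epsilon> where \<epsilon>: "\<epsilon> > 0" "\<And>y. y \<in> \<gamma> ` {0..1} \<Longrightarrow> ball y (2*\<epsilon>) \<subseteq> \<Omega>"
    using compact_margin[OF K op] p(2) unfolding path_image_def by blast
  have "uniformly_continuous_on {0..1} \<gamma>" by (rule compact_uniformly_continuous[OF cg compact_Icc])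
  then have "\<exists>d>0. \<forall>x\<in>{0..1}. \<forall>x'\<in>{0..1}. dist x' x < d \<longrightarrow> dist (\<gamma> x') (\<gamma> x) < \<epsilon>"
    using \<epsilon>(1) unfolding uniformly_continuous_on_def by blast
  then obtain d where d: "d > 0" "\<And>x x'. x \<in> {0..1} \<Longrightarrow> x' \<in> {0..1} \<Longrightarrow> dist x' x < d \<Longrightarrow> dist (\<gamma> x') (\<gamma> x) < \<epsilon>"
    by blast
  have mul: "s * t \<in> {0..1}" if "s \<in> {0..1}" "t \<in> {0..1}" for s t :: real
    using that by (auto intro: mult_le_one)
  define P where "P s \<longleftrightarrow> (\<exists>L. lift (\<lambda>t. \<gamma> (s * t)) L \<and> L 0 = v)" for s
  have "P 1"
  proof (rule step_chain[OF d(1)])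
    have "\<gamma> 0 \<in> \<gamma> ` {0..1}" by auto
    then have b: "ball (\<gamma> 0) (2*\<epsilon>) \<subseteq> \<Omega>" using \<epsilon> by blast
    obtain \<psi> where psi: "potential g \<psi> (ball (\<gamma> 0) (2*\<epsilon>))" using pot_ball[OF b] by blast
    have "lift (\<lambda>t. \<gamma> (0 * t)) (\<lambda>_. v)"
      unfolding lift_def
    proof
      fix t :: real assume "t \<in> {0..1}"
      show "\<exists>c r \<psi> e. ball c r \<subseteq> \<Omega> \<and> potential g \<psi> (ball c r) \<and> e > 0 \<and>
         (\<forall>s\<in>{0..1}. \<bar>s - t\<bar> < e \<longrightarrow> \<gamma> (0 * s) \<in> ball c r \<and> v - \<psi> (\<gamma> (0 * s)) = v - \<psi> (\<gamma> (0 * t)))"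
        using b psi \<epsilon>(1) by (intro exI[of _ "\<gamma> 0"] exI[of _ "2*\<epsilon>"] exI[of _ \<psi>] exI[of _ 1]) auto
    qed
    then show "P 0" unfolding P_def by blast
  next
    fix s s' assume s: "s \<in> {0..1}" "s' \<in> {0..1}" "\<bar>s - s'\<bar> < d" and Ps: "P s"
    then obtain L where L: "lift (\<lambda>t. \<gamma> (s * t)) L" "L 0 = v" unfolding P_def by blast
    have cgs: "continuous_on {0..1} (\<lambda>t. \<gamma> (s * t))"
    proof (rule continuous_on_compose2[OF cg])
      show "continuous_on {0..1} (\<lambda>t. s * t)" by (intro continuous_intros)
      show "(\<lambda>t. s * t) ` {0..1} \<subseteq> {0..1}" using mul[OF s(1)] by blast
    qed
    have "\<exists>M. lift (\<lambda>t. \<gamma> (s' * t)) M \<and> (\<forall>t\<in>{0..1}. \<forall>\<psi>. potential g \<psi> (ball (\<gamma> (s * t)) (2*\<epsilon>)) \<longrightarrow>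
            M t = L t + \<psi> (\<gamma> (s' * t)) - \<psi> (\<gamma> (s * t)))"
    proof (rule lift_nearby[OF cgs \<epsilon>(1) _ _ L(1)])
      fix t :: real assume t: "t \<in> {0..1}"
      show "ball (\<gamma> (s * t)) (2 * \<epsilon>) \<subseteq> \<Omega>" using \<epsilon>(2) mul[OF s(1) t] by blast
      have "\<bar>s' * t - s * t\<bar> = \<bar>s' - s\<bar> * t"
        using t by (simp add: abs_mult left_diff_distrib[symmetric])
      also have "\<dots> \<le> \<bar>s' - s\<bar>" using mult_left_le[of t "\<bar>s' - s\<bar>"] t by simp
      finally have "\<bar>s' * t - s * t\<bar> \<le> \<bar>s - s'\<bar>" by (simp add: abs_minus_commute)
      then show "dist (\<gamma> (s' * t)) (\<gamma> (s * t)) < \<epsilon>"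
        using d(2)[OF mul[OF s(1) t] mul[OF s(2) t]] s(3) by (simp add: dist_real_def)
    qed
    then obtain M where M: "lift (\<lambda>t. \<gamma> (s' * t)) M"
      "\<And>t \<psi>. t \<in> {0..1} \<Longrightarrow> potential g \<psi> (ball (\<gamma> (s * t)) (2*\<epsilon>)) \<Longrightarrow> M t = L t + \<psi> (\<gamma> (s' * t)) - \<psi> (\<gamma> (s * t))"
      by blast
    have "\<gamma> 0 \<in> \<gamma> ` {0..1}" by auto
    then have b0: "ball (\<gamma> 0) (2*\<epsilon>) \<subseteq> \<Omega>" using \<epsilon>(2) by blast
    obtain \<psi> where "potential g \<psi> (ball (\<gamma> 0) (2*\<epsilon>))" by (rule pot_ball[OF b0])
    with M(2)[of 0 \<psi>] have "M 0 = v" using L(2) by simp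
    then show "P s'" unfolding P_def using M(1) by blast
  qed
  then show ?thesis unfolding P_def by simp
qed

end


context closed_form
begin

lemma lift_cong: "lift \<gamma> L \<Longrightarrow> (\<And>t. t \<in> {0..1} \<Longrightarrow> \<gamma> t = \<eta> t) \<Longrightarrow> lift \<eta> L"
  unfolding lift_def by (metis atLeastAtMost_iff)

lemma lift_homotopy:
  assumes hp: "homotopic_paths \<Omega> p q" and L1: "lift p L1" and L2: "lift q L2" and eq0: "L1 0 = L2 0"
  shows "L1 1 = L2 1"
proof -
  obtain h where h: "continuous_on ({0..1} \<times> {0..1}) h" "h \<in> ({0..1} \<times> {0..1}) \<rightarrow> \<Omega>"
    "\<And>x. x \<in> {0..1} \<Longrightarrow> h(0,x) = p x" "\<And>x. x \<in> {0..1} \<Longrightarrow> h(1,x) = q x"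
    "\<And>t. t \<in> {0..1::real} \<Longrightarrow> pathstart(h \<circ> Pair t) = pathstart p \<and> pathfinish(h \<circ> Pair t) = pathfinish p"
    using hp unfolding homotopic_paths by blast
  have cq: "continuous_on {0..1} q" using homotopic_paths_imp_path[OF hp] unfolding path_def by simp
  have K: "compact (h ` ({0..1} \<times> {0..1}))" using h(1) by (intro compact_continuous_image compact_Times) auto
  obtain \<epsilon> where \<epsilon>: "\<epsilon> > 0" "\<And>y. y \<in> h ` ({0..1} \<times> {0..1}) \<Longrightarrow> ball y (2*\<epsilon>) \<subseteq> \<Omega>"
    using compact_margin[OF K op] h(2) by blast
  have "uniformly_continuous_on ({0..1} \<times> {0..1}) h"
    by (rule compact_uniformly_continuous[OF h(1)]) (intro compact_Times compact_Icc)
  then have "\<exists>d>0. \<forall>x\<in>{0..1} \<times> {0..1}. \<forall>x'\<in>{0..1} \<times> {0..1}. dist x' x < d \<longrightarrow> dist (h x') (h x) < \<epsilon>"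
    using \<epsilon>(1) unfolding uniformly_continuous_on_def by blast
  then obtain d where d: "d > 0" "\<And>x x'. x \<in> {0..1} \<times> {0..1} \<Longrightarrow> x' \<in> {0..1} \<times> {0..1} \<Longrightarrow> dist x' x < d \<Longrightarrow> dist (h x') (h x) < \<epsilon>"
    by blast
  have cs: "continuous_on {0..1} (\<lambda>t. h (s, t))" if "s \<in> {0..1}" for s
  proof (rule continuous_on_compose2[OF h(1)])
    show "continuous_on {0..1} (Pair s)" by (intro continuous_intros)
    show "Pair s ` {0..1} \<subseteq> {0..1} \<times> {0..1}" using that by auto
  qed
  have ends: "h (s, 0) = p 0" "h (s, 1) = p 1" if "s \<in> {0..1}" for s
    using h(5)[OF that] by (auto simp: pathstart_def pathfinish_def)
  define P where "P s \<longleftrightarrow> (\<exists>L. lift (\<lambda>t. h (s, t)) L \<and> L 0 = L1 0 \<and> L 1 = L1 1)" for s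
  have "P 1"
  proof (rule step_chain[OF d(1)])
    show "P 0" unfolding P_def using lift_cong[OF L1, of "\<lambda>t. h (0, t)"] h(3) by auto
  next
    fix s s' assume s: "s \<in> {0..1}" "s' \<in> {0..1}" "\<bar>s - s'\<bar> < d" and Ps: "P s"
    then obtain L where L: "lift (\<lambda>t. h (s, t)) L" "L 0 = L1 0" "L 1 = L1 1" unfolding P_def by blast
    have "\<exists>M. lift (\<lambda>t. h (s', t)) M \<and> (\<forall>t\<in>{0..1}. \<forall>\<psi>. potential g \<psi> (ball (h (s, t)) (2*\<epsilon>)) \<longrightarrow>
            M t = L t + \<psi> (h (s', t)) - \<psi> (h (s, t)))"
    proof (rule lift_nearby[OF cs[OF s(1)] \<epsilon>(1) _ _ L(1)])
      fix t :: real assume t: "t \<in> {0..1}"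
      show "ball (h (s, t)) (2 * \<epsilon>) \<subseteq> \<Omega>" using \<epsilon>(2) s(1) t by blast
      have "dist (s', t) (s, t) < d" using s(3) by (simp add: dist_Pair_Pair dist_real_def abs_minus_commute)
      then show "dist (h (s', t)) (h (s, t)) < \<epsilon>" using d(2)[of "(s,t)" "(s',t)"] s t by auto
    qed
    then obtain M where M: "lift (\<lambda>t. h (s', t)) M"
      "\<And>t \<psi>. t \<in> {0..1} \<Longrightarrow> potential g \<psi> (ball (h (s, t)) (2*\<epsilon>)) \<Longrightarrow> M t = L t + \<psi> (h (s', t)) - \<psi> (h (s, t))"
      by blast
    have "h (s, 0) \<in> h ` ({0..1} \<times> {0..1})" "h (s, 1) \<in> h ` ({0..1} \<times> {0..1})" using s by auto
    then have b0: "ball (h (s, 0)) (2*\<epsilon>) \<subseteq> \<Omega>" and b1: "ball (h (s, 1)) (2*\<epsilon>) \<subseteq> \<Omega>" using \<epsilon>(2) by blast+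
    obtain \<psi>0 where "potential g \<psi>0 (ball (h (s, 0)) (2*\<epsilon>))" by (rule pot_ball[OF b0])
    with M(2)[of 0 \<psi>0] have "M 0 = L 0" using ends s by simp
    moreover obtain \<psi>1 where "potential g \<psi>1 (ball (h (s, 1)) (2*\<epsilon>))" by (rule pot_ball[OF b1])
    with M(2)[of 1 \<psi>1] have "M 1 = L 1" using ends s by simp
    ultimately show "P s'" unfolding P_def using M(1) L by auto
  qed
  then obtain L where L: "lift (\<lambda>t. h (1, t)) L" "L 0 = L1 0" "L 1 = L1 1" unfolding P_def by blast
  have "lift q L" using lift_cong[OF L(1), of q] h(4) by auto
  from lift_unique[OF this L2 cq, of 1] L eq0 show ?thesis by simp
qed

end


context closed_form
begin

theorem global_potential:
  assumes sc: "simply_connected \<Omega>"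
  shows "\<exists>\<psi>. potential g \<psi> \<Omega>"
proof (cases "\<Omega> = {}")
  case True then show ?thesis by (auto simp: potential_def)
next
  case False
  then obtain z0 where z0: "z0 \<in> \<Omega>" by blast
  have pc: "path_connected \<Omega>" and hom: "\<And>p q. path p \<Longrightarrow> path_image p \<subseteq> \<Omega> \<Longrightarrow> path q \<Longrightarrow> path_image q \<subseteq> \<Omega> \<Longrightarrow>
      pathstart q = pathstart p \<Longrightarrow> pathfinish q = pathfinish p \<Longrightarrow> homotopic_paths \<Omega> p q"
    using sc unfolding simply_connected_eq_homotopic_paths by blast+
  define Good where "Good x v \<longleftrightarrow> (\<exists>\<gamma> L. path \<gamma> \<and> path_image \<gamma> \<subseteq> \<Omega> \<and> pathstart \<gamma> = z0 \<and>
      pathfinish \<gamma> = x \<and> lift \<gamma> L \<and> L 0 = 0 \<and> L 1 = v)" for x v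
  define V where "V x = (THE v. Good x v)" for x
  have V: "V x = L 1" if "path \<gamma>" "path_image \<gamma> \<subseteq> \<Omega>" "pathstart \<gamma> = z0" "pathfinish \<gamma> = x"
    "lift \<gamma> L" "L 0 = 0" for \<gamma> L x
    unfolding V_def
  proof (rule the_equality)
    show "Good x (L 1)" unfolding Good_def using that by blast
    fix v assume "Good x v"
    then obtain \<gamma>' L' where g': "path \<gamma>'" "path_image \<gamma>' \<subseteq> \<Omega>" "pathstart \<gamma>' = z0"
      "pathfinish \<gamma>' = x" "lift \<gamma>' L'" "L' 0 = 0" "L' 1 = v" unfolding Good_def by blast
    have "homotopic_paths \<Omega> \<gamma> \<gamma>'" using hom[of \<gamma> \<gamma>'] that g' by simp
    from lift_homotopy[OF this that(5) g'(5)] that(6) g'(6,7) show "v = L 1" by simp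
  qed
  have "potential g V \<Omega>"
    unfolding potential_def
  proof
    fix x assume x: "x \<in> \<Omega>"
    obtain \<gamma> where \<gamma>: "path \<gamma>" "path_image \<gamma> \<subseteq> \<Omega>" "pathstart \<gamma> = z0" "pathfinish \<gamma> = x"
      using pc z0 x unfolding path_connected_def by blast
    obtain L where L: "lift \<gamma> L" "L 0 = 0" using lift_exists[OF \<gamma>(1,2)] by blast
    have cg: "continuous_on {0..1} \<gamma>" using \<gamma>(1) unfolding path_def by simp
    have K: "compact (\<gamma> ` {0..1})" using cg by (intro compact_continuous_image) auto
    obtain \<epsilon> where \<epsilon>: "\<epsilon> > 0" "\<And>y. y \<in> \<gamma> ` {0..1} \<Longrightarrow> ball y (2*\<epsilon>) \<subseteq> \<Omega>"
      using compact_margin[OF K op] \<gamma>(2) unfolding path_image_def by blast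
    have g0: "\<gamma> 0 = z0" and g1: "\<gamma> 1 = x" using \<gamma>(3,4) by (simp_all add: pathstart_def pathfinish_def)
    have "\<gamma> 1 \<in> \<gamma> ` {0..1}" "\<gamma> 0 \<in> \<gamma> ` {0..1}" by auto
    then have b1: "ball x (2*\<epsilon>) \<subseteq> \<Omega>" and b0: "ball z0 (2*\<epsilon>) \<subseteq> \<Omega>" using \<epsilon>(2) g0 g1 by auto
    obtain \<Psi> where \<Psi>: "potential g \<Psi> (ball x (2*\<epsilon>))" by (rule pot_ball[OF b1])
    obtain \<Psi>0 where \<Psi>0: "potential g \<Psi>0 (ball z0 (2*\<epsilon>))" by (rule pot_ball[OF b0])
    have loc: "V y = V x + \<Psi> y - \<Psi> x" if y: "y \<in> ball x \<epsilon>" for y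
    proof -
      define \<eta> where "\<eta> t = \<gamma> t + t *\<^sub>R (y - x)" for t
      have ce: "continuous_on {0..1} \<eta>" unfolding \<eta>_def by (intro continuous_intros cg)
      have close: "dist (\<eta> t) (\<gamma> t) < \<epsilon>" if "t \<in> {0..1}" for t
      proof -
        have "dist (\<eta> t) (\<gamma> t) = t * norm (y - x)" using that by (simp add: \<eta>_def dist_norm)
        also have "\<dots> \<le> norm (y - x)" using that mult_left_le_one_le[of "norm (y-x)" t] by simp
        also have "\<dots> < \<epsilon>" using y by (simp add: dist_norm norm_minus_commute)
        finally show ?thesis .
      qed
      have inO: "ball (\<gamma> t) (2*\<epsilon>) \<subseteq> \<Omega>" if "t \<in> {0..1}" for t using \<epsilon>(2) that by blast
      have \<eta>O: "\<eta> t \<in> \<Omega>" if "t \<in> {0..1}" for t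
        using inO[OF that] close[OF that] \<epsilon>(1) by (auto simp: dist_commute)
      obtain M where M: "lift \<eta> M"
        "\<And>t \<psi>. t \<in> {0..1} \<Longrightarrow> potential g \<psi> (ball (\<gamma> t) (2*\<epsilon>)) \<Longrightarrow> M t = L t + \<psi> (\<eta> t) - \<psi> (\<gamma> t)"
        using lift_nearby[OF cg \<epsilon>(1) inO close L(1)] by blast
      have M0: "M 0 = 0" using M(2)[of 0 \<Psi>0] \<Psi>0 L(2) g0 by (simp add: \<eta>_def)
      have M1: "M 1 = L 1 + \<Psi> y - \<Psi> x" using M(2)[of 1 \<Psi>] \<Psi> g1 by (simp add: \<eta>_def)
      have "V y = M 1"
      proof (rule V)
        show "path \<eta>" using ce unfolding path_def by simp
        show "path_image \<eta> \<subseteq> \<Omega>" using \<eta>O unfolding path_image_def by blast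
        show "pathstart \<eta> = z0" "pathfinish \<eta> = y" using g0 g1 by (simp_all add: \<eta>_def pathstart_def pathfinish_def)
      qed (use M(1) M0 in auto)
      moreover have "V x = L 1" by (rule V[OF \<gamma> L])
      ultimately show ?thesis using M1 by simp
    qed
    have "((\<lambda>y. V x + \<Psi> y - \<Psi> x) has_derivative (\<lambda>h. g x \<bullet> h)) (at x)"
    proof -
      have "(\<Psi> has_derivative (\<lambda>h. g x \<bullet> h)) (at x)" using \<Psi> \<epsilon>(1) unfolding potential_def by simp
      then show ?thesis by (auto intro!: derivative_eq_intros)
    qed
    then show "(V has_derivative (\<lambda>h. g x \<bullet> h)) (at x)"
    proof (rule has_derivative_transform_within_open[where s="ball x \<epsilon>"])
      show "open (ball x \<epsilon>)" by simp
      show "x \<in> ball x \<epsilon>" using \<epsilon>(1) by simp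
      fix y assume "y \<in> ball x \<epsilon>"
      then show "V x + \<Psi> y - \<Psi> x = V y" using loc by simp
    qed
  qed
  then show ?thesis by blast
qed

end



definition bas :: "('n::finite) set \<Rightarrow> 'n mvec" where
  "bas A = (\<chi> C. if C = A then 1 else 0)"

lemma cmult_comp: "cmult x y $ C = (\<Sum>A\<in>UNIV. \<Sum>B\<in>UNIV.
       (if (A - B) \<union> (B - A) = C then csign A B * (x $ A) * (y $ B) else 0))"
  by (simp add: cmult_def)

lemma cmult_add_left: "cmult (x + y) z = cmult x z + cmult y z"
  by (simp add: vec_eq_iff cmult_comp algebra_simps sum.distrib[symmetric] if_distrib cong: if_cong)

lemma cmult_add_right: "cmult z (x + y) = cmult z x + cmult z y"
  by (simp add: vec_eq_iff cmult_comp algebra_simps sum.distrib[symmetric] if_distrib cong: if_cong)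

lemma cmult_scale_left: "cmult (r *\<^sub>R x) z = r *\<^sub>R cmult x z"
  by (simp add: vec_eq_iff cmult_comp sum_distrib_left if_distrib algebra_simps cong: if_cong)

lemma cmult_scale_right: "cmult z (r *\<^sub>R x) = r *\<^sub>R cmult z x"
  by (simp add: vec_eq_iff cmult_comp sum_distrib_left if_distrib algebra_simps cong: if_cong)

lemma cmult_basis: "cmult (bas A) (bas B) = csign A B *\<^sub>R bas ((A - B) \<union> (B - A))"
proof -
  have *: "(if (A' - B') \<union> (B' - A') = C then csign A' B' * (bas A $ A') * (bas B $ B') else 0) =
     (if A' = A then (if B' = B then (if (A - B) \<union> (B - A) = C then csign A B else 0) else 0) else 0)"
    for A' B' C by (auto simp: bas_def)
  show ?thesis
  proof (unfold vec_eq_iff, intro allI)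
    fix C
    have "cmult (bas A) (bas B) $ C = (\<Sum>A'\<in>UNIV. \<Sum>B'\<in>UNIV.
       (if A' = A then (if B' = B then (if (A - B) \<union> (B - A) = C then csign A B else 0) else 0) else 0))"
      unfolding cmult_comp * ..
    also have "\<dots> = (\<Sum>A'\<in>UNIV. (if A' = A then (if (A - B) \<union> (B - A) = C then csign A B else 0) else 0))"
      by (intro sum.cong refl, case_tac "x = A") simp_all
    also have "\<dots> = (if (A - B) \<union> (B - A) = C then csign A B else 0)"
      by (simp add: sum.delta)
    finally show "cmult (bas A) (bas B) $ C = (csign A B *\<^sub>R bas ((A - B) \<union> (B - A))) $ C"
      by (simp add: bas_def)
  qed
qed

lemma cmult_zero_left [simp]: "cmult 0 z = 0"
  using cmult_scale_left[of 0 x z for x] by simp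

lemma cmult_zero_right [simp]: "cmult z 0 = 0"
  using cmult_scale_right[of z 0 x for x] by simp

lemma cmult_sum_left: "cmult (\<Sum>i\<in>I. f i) z = (\<Sum>i\<in>I. cmult (f i) z)"
  by (induction I rule: infinite_finite_induct) (simp_all add: cmult_add_left)

lemma cmult_sum_right: "cmult z (\<Sum>i\<in>I. f i) = (\<Sum>i\<in>I. cmult z (f i))"
  by (induction I rule: infinite_finite_induct) (simp_all add: cmult_add_right)

lemma cgen_bas: "cgen j = bas {j}"
  by (simp add: cgen_def bas_def)

lemma csc_bas: "csc r = r *\<^sub>R bas {}"
  by (simp add: csc_def bas_def vec_eq_iff)

lemma cvec_bas: "cvec a = (\<Sum>j\<in>UNIV. (a $ j) *\<^sub>R bas {j})"
  by (simp add: cvec_def cgen_bas)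

lemma bas_comp: "bas A $ C = (if C = A then 1 else 0)"
  by (simp add: bas_def)

lemma csign_single_empty: "csign {j} {} = 1"
  by (simp add: csign_def)

lemma csign_same: "csign {j} {j} = -1"
proof -
  have "{(a, b). a \<in> {j} \<and> b \<in> {j} \<and> b < a} = {}" by auto
  then show ?thesis unfolding csign_def by (simp only:) simp
qed

lemma csign_diff:
  fixes j k :: "'n::{finite,linorder}"
  assumes "j \<noteq> k"
  shows "csign {j} {k} = (if k < j then -1 else 1)"
proof -
  have "{(a, b). a \<in> {j} \<and> b \<in> {k} \<and> b < a} = (if k < j then {(j,k)} else {})" by auto
  moreover have "{j} \<inter> {k} = {}" using assms by auto
  ultimately show ?thesis unfolding csign_def by simp
qed

lemma sd_single: "({j} - {k}) \<union> ({k} - {j}) = (if j = k then {} else {j, k})"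
  by auto

lemma cmult_gen_gen_sym:
  fixes j k :: "'n::{finite,linorder}"
  shows "cmult (bas {j}) (bas {k}) + cmult (bas {k}) (bas {j}) = (if j = k then -2 else 0) *\<^sub>R bas {}"
proof (cases "j = k")
  case True
  have "(-1) *\<^sub>R x + (-1) *\<^sub>R x = (-2::real) *\<^sub>R x" for x :: "'n mvec"
  proof -
    have "((-1) + (-1)::real) = -2" by simp
    then show ?thesis by (metis scaleR_left_distrib)
  qed
  then show ?thesis using True by (simp only: cmult_basis csign_same sd_single if_True simp_thms)
next
  case False
  then have "k < j \<or> j < k" by auto
  then show ?thesis using False
    by (auto simp add: cmult_basis csign_diff sd_single insert_commute)
qed

lemma cmult_cvec: "cmult (cvec a) (cvec b) = (\<Sum>j\<in>UNIV. \<Sum>k\<in>UNIV. (a $ j * b $ k) *\<^sub>R cmult (bas {j}) (bas {k}))"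
  unfolding cvec_bas[of a] cmult_sum_left cmult_scale_left
  unfolding cvec_bas[of b] cmult_sum_right cmult_scale_right scaleR_sum_right scaleR_scaleR ..

lemma cmult_cvec_sym:
  fixes a b :: "('n::{finite,linorder}) rvec"
  shows "cmult (cvec a) (cvec b) + cmult (cvec b) (cvec a) = csc (- 2 * (a \<bullet> b))"
proof -
  have "cmult (cvec a) (cvec b) + cmult (cvec b) (cvec a) =
     (\<Sum>j\<in>UNIV. \<Sum>k\<in>UNIV. (a $ j * b $ k) *\<^sub>R cmult (bas {j}) (bas {k})) +
     (\<Sum>j\<in>UNIV. \<Sum>k\<in>UNIV. (a $ j * b $ k) *\<^sub>R cmult (bas {k}) (bas {j}))"
    unfolding cmult_cvec by (subst (2) sum.swap) (simp add: mult.commute)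
  also have "\<dots> = (\<Sum>j\<in>UNIV. \<Sum>k\<in>UNIV. (a $ j * b $ k) *\<^sub>R (cmult (bas {j}) (bas {k}) + cmult (bas {k}) (bas {j})))"
    by (simp add: sum.distrib[symmetric] scaleR_add_right)
  also have "\<dots> = (\<Sum>j\<in>UNIV. \<Sum>k\<in>UNIV. (if j = k then (-2 * (a $ j * b $ k)) *\<^sub>R bas {} else 0))"
    unfolding cmult_gen_gen_sym by (intro sum.cong refl) auto
  also have "\<dots> = (\<Sum>j\<in>UNIV. (-2 * (a $ j * b $ j)) *\<^sub>R bas {})"
    by (simp add: sum.delta)
  also have "\<dots> = (\<Sum>j\<in>UNIV. (-2 * (a $ j * b $ j))) *\<^sub>R bas {}"
    by (simp only: scaleR_sum_left)
  also have "\<dots> = csc (- 2 * (a \<bullet> b))"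
    by (simp add: csc_bas inner_vec_def sum_distrib_left)
  finally show ?thesis .
qed

lemma cmult_cvec_self:
  fixes a :: "('n::{finite,linorder}) rvec"
  shows "cmult (cvec a) (cvec a) = csc (- (a \<bullet> a))"
proof -
  have "2 *\<^sub>R cmult (cvec a) (cvec a) = 2 *\<^sub>R csc (- (a \<bullet> a))"
    using cmult_cvec_sym[of a a] by (simp add: csc_bas scaleR_2)
  then show ?thesis by simp
qed

lemma cmult_gen_csc: "cmult (cgen j) (csc r) = r *\<^sub>R cgen j"
  by (simp add: cgen_bas csc_bas cmult_scale_right cmult_basis csign_single_empty)

lemma cvec_comp_single: "cvec a $ {j} = a $ j"
proof -
  have "cvec a $ {j} = (\<Sum>i\<in>UNIV. a $ i * (if {j} = {i} then 1 else 0))"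
    by (simp add: cvec_bas bas_comp)
  also have "\<dots> = (\<Sum>i\<in>UNIV. (if i = j then a $ i else 0))"
    by (intro sum.cong) auto
  finally show ?thesis by simp
qed

lemma cinner_cvec: "cinner (cvec a) (cvec b) = a \<bullet> b"
  by (simp add: cinner_def cvec_comp_single inner_vec_def)

lemma cvec_add: "cvec (a + b) = cvec a + cvec b"
  by (simp add: cvec_def scaleR_add_left sum.distrib)

lemma cvec_scale: "cvec (r *\<^sub>R a) = r *\<^sub>R cvec a"
  by (simp add: cvec_def scaleR_sum_right)

lemma cvec_inj: "cvec a = cvec b \<Longrightarrow> a = b"
  by (metis cvec_comp_single vec_eq_iff)

lemma bounded_linear_cvec: "bounded_linear cvec"
  by (simp add: linear_conv_bounded_linear[symmetric] linear_iff cvec_add cvec_scale)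

lemma bounded_linear_csc: "bounded_linear csc"
  by (simp add: linear_conv_bounded_linear[symmetric] linear_iff csc_bas scaleR_add_left)


lemma cmult_gen_cvec_biv:
  fixes j k i :: "'n::{finite,linorder}"
  assumes jk: "j < k"
  shows "cmult (bas {i}) (cvec w) $ {j, k} = (if i = j then w $ k else if i = k then - (w $ j) else 0)"
proof -
  have trm: "w $ l * (csign {i} {l} * (if {j, k} = ({i} - {l}) \<union> ({l} - {i}) then 1 else 0)) =
     (if i = j \<and> l = k then w $ k else if i = k \<and> l = j then - (w $ j) else 0)" for l
  proof (cases "i = l")
    case True then show ?thesis using jk by auto
  next
    case False
    then have sd: "({i} - {l}) \<union> ({l} - {i}) = {i, l}" by auto
    have eq: "({j, k} = {i, l}) \<longleftrightarrow> (i = j \<and> l = k) \<or> (i = k \<and> l = j)"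
      unfolding doubleton_eq_iff by blast
    have kj: "{k, j} = {j, k}" by (rule insert_commute)
    show ?thesis
    proof (cases "i = j \<and> l = k")
      case True
      then have ij: "i = j" "l = k" by auto
      have "csign {i} {l} = 1" using ij jk csign_diff[of j k] by simp
      moreover have "({j, k} = ({i} - {l}) \<union> ({l} - {i})) = True" using ij sd by simp
      ultimately show ?thesis using ij by (simp only: if_True) simp
    next
      case F1: False
      show ?thesis
      proof (cases "i = k \<and> l = j")
        case True
        then have ij: "i = k" "l = j" by auto
        have "csign {i} {l} = -1" using ij jk csign_diff[of k j] by simp
        moreover have "({j, k} = ({i} - {l}) \<union> ({l} - {i})) = True" using ij sd kj by simp
        moreover have "\<not> (i = j \<and> l = k)" using ij jk by simp
        ultimately show ?thesis using ij by (simp only: if_True if_False) simp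
      next
        case False
        then have "({j, k} = ({i} - {l}) \<union> ({l} - {i})) = False" using F1 eq sd by simp
        then show ?thesis using F1 False by (simp only: if_False)
      qed
    qed
  qed
  have "cmult (bas {i}) (cvec w) $ {j, k} =
     (\<Sum>l\<in>UNIV. w $ l * (csign {i} {l} * (if {j, k} = ({i} - {l}) \<union> ({l} - {i}) then 1 else 0)))"
    by (simp only: cvec_bas cmult_sum_right cmult_scale_right cmult_basis sum_component vector_scaleR_component bas_comp real_scaleR_def)
  also have "\<dots> = (\<Sum>l\<in>UNIV. (if i = j \<and> l = k then w $ k else if i = k \<and> l = j then - (w $ j) else 0))"
    unfolding trm ..
  also have "\<dots> = (if i = j then w $ k else if i = k then - (w $ j) else 0)"
  proof (cases "i = j")
    case True
    have "(\<Sum>l\<in>UNIV. (if i = j \<and> l = k then w $ k else if i = k \<and> l = j then - (w $ j) else 0)) =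
       (\<Sum>l\<in>UNIV. (if l = k then w $ k else 0))"
      by (intro sum.cong) (use True jk in auto)
    then show ?thesis using True by simp
  next
    case F: False
    show ?thesis
    proof (cases "i = k")
      case True
      have "(\<Sum>l\<in>UNIV. (if i = j \<and> l = k then w $ k else if i = k \<and> l = j then - (w $ j) else 0)) =
         (\<Sum>l\<in>UNIV. (if l = j then - (w $ j) else 0))"
        by (intro sum.cong) (use True F in auto)
      then show ?thesis using True F by simp
    next
      case False
      then show ?thesis using F by simp
    qed
  qed
  finally show ?thesis .
qed

lemma dirac_sum_biv:
  fixes j k :: "'n::{finite,linorder}"
  assumes jk: "j < k"
  shows "(\<Sum>i\<in>UNIV. cmult (bas {i}) (cvec (D i))) $ {j, k} = D j $ k - D k $ j"
proof -
  have "(\<Sum>i\<in>UNIV. cmult (bas {i}) (cvec (D i))) $ {j, k} =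
    (\<Sum>i\<in>UNIV. (if i = j then D i $ k else if i = k then - (D i $ j) else 0))"
    by (simp add: cmult_gen_cvec_biv[OF jk])
  also have "\<dots> = (\<Sum>i\<in>UNIV. (if i = j then D i $ k else 0) + (if i = k then - (D i $ j) else 0))"
    using jk by (intro sum.cong) auto
  also have "\<dots> = D j $ k - D k $ j"
    by (simp add: sum.distrib sum.delta)
  finally show ?thesis .
qed

lemma csc_comp_biv: "j \<noteq> k \<Longrightarrow> csc r $ {j, k} = 0"
  by (simp add: csc_def)


lemma has_partial_vd:
  "has_partial F j x \<Longrightarrow> ((\<lambda>t. F (x + t *\<^sub>R axis j 1)) has_vector_derivative cpartial F j x) (at 0)"
  unfolding has_partial_def cpartial_def by (rule vector_derivative_works[THEN iffD1])

lemma vd_partial: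
  assumes "((\<lambda>t. F (x + t *\<^sub>R axis j 1)) has_vector_derivative D) (at 0)"
  shows "has_partial F j x" "cpartial F j x = D"
  using assms unfolding has_partial_def cpartial_def
  by (auto intro: differentiableI_vector vector_derivative_at)

lemma frechet_vd:
  assumes "(F has_derivative F') (at x)"
  shows "((\<lambda>t. F (x + t *\<^sub>R axis j 1)) has_vector_derivative F' (axis j 1)) (at 0)"
proof -
  have l: "((\<lambda>t::real. x + t *\<^sub>R axis j 1) has_derivative (\<lambda>s. s *\<^sub>R axis j 1)) (at 0)"
    by (auto intro!: derivative_eq_intros)
  have F: "(F has_derivative F') (at ((\<lambda>t::real. x + t *\<^sub>R axis j 1) 0))" using assms by simp
  have "((F \<circ> (\<lambda>t. x + t *\<^sub>R axis j 1)) has_derivative (F' \<circ> (\<lambda>s. s *\<^sub>R axis j 1))) (at 0)"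
    by (rule diff_chain_at[OF l F])
  moreover have "bounded_linear F'" using assms by (rule has_derivative_bounded_linear)
  ultimately show ?thesis
    unfolding has_vector_derivative_def
    by (simp add: o_def linear_scale[OF bounded_linear.linear] )
qed

lemma frechet_partial:
  assumes "(F has_derivative F') (at x)"
  shows "has_partial F j x" "cpartial F j x = F' (axis j 1)"
  using vd_partial[OF frechet_vd[OF assms]] by auto

lemma partial_linear:
  assumes T: "bounded_linear T" and p: "has_partial F j x"
  shows "has_partial (\<lambda>y. T (F y)) j x" "cpartial (\<lambda>y. T (F y)) j x = T (cpartial F j x)"
proof -
  have "((\<lambda>t. T (F (x + t *\<^sub>R axis j 1))) has_vector_derivative T (cpartial F j x)) (at 0)"
    using bounded_linear.has_vector_derivative[OF T has_partial_vd[OF p]] .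
  from vd_partial[OF this] show "has_partial (\<lambda>y. T (F y)) j x" "cpartial (\<lambda>y. T (F y)) j x = T (cpartial F j x)" by auto
qed

lemma partial_add:
  assumes "has_partial F j x" "has_partial G j x"
  shows "has_partial (\<lambda>y. F y + G y) j x" "cpartial (\<lambda>y. F y + G y) j x = cpartial F j x + cpartial G j x"
proof -
  have "((\<lambda>t. F (x + t *\<^sub>R axis j 1) + G (x + t *\<^sub>R axis j 1)) has_vector_derivative cpartial F j x + cpartial G j x) (at 0)"
    by (intro has_vector_derivative_add has_partial_vd assms)
  from vd_partial[OF this] show "has_partial (\<lambda>y. F y + G y) j x"
    "cpartial (\<lambda>y. F y + G y) j x = cpartial F j x + cpartial G j x" by auto
qed

lemma partial_cong:
  assumes U: "open U" "x \<in> U" and eq: "\<And>y. y \<in> U \<Longrightarrow> F y = G y"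
  shows "has_partial F j x = has_partial G j x" "cpartial F j x = cpartial G j x"
proof -
  obtain r where r: "r > 0" "ball x r \<subseteq> U" using U openE by blast
  have eqt: "F (x + t *\<^sub>R axis j 1) = G (x + t *\<^sub>R axis j 1)" if "t \<in> ball 0 r" for t
  proof (rule eq)
    have "dist x (x + t *\<^sub>R axis j 1) = \<bar>t\<bar>" by (simp add: dist_norm)
    then show "x + t *\<^sub>R axis j 1 \<in> U" using that r by auto
  qed
  have iff: "((\<lambda>t. F (x + t *\<^sub>R axis j 1)) has_vector_derivative D) (at 0) \<longleftrightarrow>
             ((\<lambda>t. G (x + t *\<^sub>R axis j 1)) has_vector_derivative D) (at 0)" for D
    using r eqt
    by (metis (no_types, lifting) centre_in_ball has_vector_derivative_transform_within_open open_ball)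
  show "has_partial F j x = has_partial G j x"
    unfolding has_partial_def vector_derivative_works[symmetric]
    by (metis iff differentiableI_vector vector_derivative_works)
  show "cpartial F j x = cpartial G j x"
    unfolding cpartial_def vector_derivative_def using iff by simp
qed



lemma csc_add: "csc a + csc b = csc (a + b)"
  by (simp add: csc_bas scaleR_add_left)

lemma csc_uminus: "- csc a = csc (- a)"
  by (simp add: csc_bas)

lemma csc_scale: "r *\<^sub>R csc a = csc (r * a)"
  by (simp add: csc_bas)

lemma csc_zero: "csc 0 = 0"
  by (simp add: csc_bas)

lemma dirac_frechet:
  assumes "(g has_derivative G') (at x)"
  shows "has_partial (\<lambda>y. cvec (g y)) j x"
    "dirac (\<lambda>y. cvec (g y)) x = (\<Sum>j\<in>UNIV. cmult (cgen j) (cvec (G' (axis j 1))))"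
proof -
  have d: "((\<lambda>y. cvec (g y)) has_derivative (\<lambda>h. cvec (G' h))) (at x)"
    by (rule bounded_linear.has_derivative[OF bounded_linear_cvec assms])
  show "has_partial (\<lambda>y. cvec (g y)) j x" by (rule frechet_partial(1)[OF d])
  show "dirac (\<lambda>y. cvec (g y)) x = (\<Sum>j\<in>UNIV. cmult (cgen j) (cvec (G' (axis j 1))))"
    unfolding dirac_def using frechet_partial(2)[OF d] by simp
qed

lemma KC_equiv:
  fixes g h :: "('n::{finite,linorder}) rvec \<Rightarrow> 'n rvec"
  assumes hp: "\<And>j. has_partial (\<lambda>y. cvec (h y)) j x"
    and hr: "dirac (\<lambda>y. cvec (h y)) x + cmult (cvec (h x)) (cvec (h x)) = csc (v x)"
    and gd: "(g has_derivative G') (at x)"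
  shows "((\<forall>j. has_partial (\<lambda>y. cvec (g y + h y)) j x) \<and>
      dirac (\<lambda>y. cvec (g y + h y)) x + cmult (cvec (g x + h x)) (cvec (g x + h x)) = csc (v x)) \<longleftrightarrow>
    dirac (\<lambda>y. cvec (g y)) x = csc (g x \<bullet> g x + 2 * (g x \<bullet> h x))"
proof -
  have gp: "has_partial (\<lambda>y. cvec (g y)) j x" for j by (rule dirac_frechet(1)[OF gd])
  have fe: "(\<lambda>y. cvec (g y + h y)) = (\<lambda>y. cvec (g y) + cvec (h y))" by (simp add: cvec_add)
  have sp: "has_partial (\<lambda>y. cvec (g y + h y)) j x" for j
    unfolding fe by (rule partial_add(1)[OF gp hp])
  have sd: "dirac (\<lambda>y. cvec (g y + h y)) x = dirac (\<lambda>y. cvec (g y)) x + dirac (\<lambda>y. cvec (h y)) x"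
    unfolding fe dirac_def partial_add(2)[OF gp hp] cmult_add_right sum.distrib ..
  define W where "W = dirac (\<lambda>y. cvec (g y)) x"
  define B where "B = (\<lambda>a b :: 'n rvec. cmult (cvec a) (cvec b))"
  have sq: "cmult (cvec (g x + h x)) (cvec (g x + h x)) = B (g x) (g x) + (B (g x) (h x) + B (h x) (g x)) + B (h x) (h x)"
    unfolding B_def cvec_add cmult_add_left cmult_add_right by (simp add: algebra_simps)
  have Bgg: "B (g x) (g x) = csc (- (g x \<bullet> g x))" unfolding B_def by (rule cmult_cvec_self)
  have Bgh: "B (g x) (h x) + B (h x) (g x) = csc (- 2 * (g x \<bullet> h x))" unfolding B_def by (rule cmult_cvec_sym)
  have "dirac (\<lambda>y. cvec (g y + h y)) x + cmult (cvec (g x + h x)) (cvec (g x + h x)) =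
      (W + B (g x) (g x) + (B (g x) (h x) + B (h x) (g x))) + (dirac (\<lambda>y. cvec (h y)) x + B (h x) (h x))"
    unfolding sd sq W_def by (simp add: algebra_simps)
  also have "\<dots> = (W + B (g x) (g x) + (B (g x) (h x) + B (h x) (g x))) + csc (v x)"
    using hr unfolding B_def by simp
  finally have eq: "dirac (\<lambda>y. cvec (g y + h y)) x + cmult (cvec (g x + h x)) (cvec (g x + h x)) =
      (W + csc (- (g x \<bullet> g x) + - 2 * (g x \<bullet> h x))) + csc (v x)"
    unfolding Bgg Bgh by (simp add: csc_add add.assoc)
  have "W + csc (- (g x \<bullet> g x) + - 2 * (g x \<bullet> h x)) = 0 \<longleftrightarrow> W = csc (g x \<bullet> g x + 2 * (g x \<bullet> h x))"
  proof -
    have "W + csc (- (g x \<bullet> g x) + - 2 * (g x \<bullet> h x)) = 0 \<longleftrightarrow> W = - csc (- (g x \<bullet> g x) + - 2 * (g x \<bullet> h x))"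
      by (simp add: add_eq_0_iff2)
    also have "- csc (- (g x \<bullet> g x) + - 2 * (g x \<bullet> h x)) = csc (g x \<bullet> g x + 2 * (g x \<bullet> h x))"
      by (simp add: csc_uminus) (metis add.commute)
    finally show ?thesis .
  qed
  then show ?thesis using sp unfolding eq W_def by simp
qed

lemma sym_from_partials:
  fixes D :: "('n::finite) rvec \<Rightarrow> 'n rvec"
  assumes lin: "linear D" and sym: "\<And>j k. D (axis j 1) $ k = D (axis k 1) $ j"
  shows "D u \<bullet> w = D w \<bullet> u"
proof -
  have exp: "D u = (\<Sum>j\<in>UNIV. (u $ j) *\<^sub>R D (axis j 1))" for u
  proof -
    have "u = (\<Sum>j\<in>UNIV. (u $ j) *\<^sub>R axis j 1)"
      by (simp add: vec_eq_iff axis_def if_distrib sum.delta cong: if_cong)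
    then have "D u = D (\<Sum>j\<in>UNIV. (u $ j) *\<^sub>R axis j 1)" by simp
    also have "\<dots> = (\<Sum>j\<in>UNIV. (u $ j) *\<^sub>R D (axis j 1))"
      by (simp add: linear_sum[OF lin] linear_scale[OF lin])
    finally show ?thesis .
  qed
  define S where "S a b = (\<Sum>j\<in>UNIV. \<Sum>k\<in>UNIV. a $ j * b $ k * D (axis j 1) $ k)" for a b
  have DS: "D a \<bullet> b = S a b" for a b
  proof -
    have "D a \<bullet> b = (\<Sum>k\<in>UNIV. (\<Sum>j\<in>UNIV. a $ j * D (axis j 1) $ k) * b $ k)"
      unfolding exp[of a] inner_vec_def by simp
    also have "\<dots> = (\<Sum>k\<in>UNIV. \<Sum>j\<in>UNIV. a $ j * b $ k * D (axis j 1) $ k)"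
      by (simp add: sum_distrib_right sum_distrib_left algebra_simps)
    also have "\<dots> = S a b" unfolding S_def by (rule sum.swap)
    finally show ?thesis .
  qed
  have "S u w = (\<Sum>j\<in>UNIV. \<Sum>k\<in>UNIV. u $ j * w $ k * D (axis k 1) $ j)"
    unfolding S_def by (simp add: sym)
  also have "\<dots> = S w u"
    unfolding S_def by (subst sum.swap) (simp add: mult.commute)
  finally have "S u w = S w u" .
  then show ?thesis by (simp add: DS)
qed

lemma cmult_cvec_left: "cmult (cvec a) X = (\<Sum>j\<in>UNIV. (a $ j) *\<^sub>R cmult (cgen j) X)"
  unfolding cvec_def cmult_sum_left cmult_scale_left ..

lemma cvec_sum_gen: "(\<Sum>j\<in>UNIV. (r * a $ j) *\<^sub>R cgen j) = r *\<^sub>R cvec a"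
  by (simp add: cvec_def scaleR_sum_right)

lemma forward:
  fixes \<Omega> :: "('n::{finite,linorder}) rvec set"
    and v :: "'n rvec \<Rightarrow> real"
    and h g :: "'n rvec \<Rightarrow> 'n rvec"
  assumes op: "open \<Omega>" and sc: "simply_connected \<Omega>"
    and rh: "riccati_solution \<Omega> v h"
    and gd: "g differentiable_on \<Omega>"
    and rgh: "riccati_solution \<Omega> v (\<lambda>x. g x + h x)"
  shows "\<exists>\<phi>. aux_solution \<Omega> h \<phi> \<and> (\<forall>x\<in>\<Omega>. \<phi> x \<noteq> 0) \<and>
         (\<forall>x\<in>\<Omega>. cvec (g x) = (1 / \<phi> x) *\<^sub>R dirac (cscf \<phi>) x)"
proof -
  define Gd where "Gd x = frechet_derivative g (at x)" for x
  have GD: "(g has_derivative Gd x) (at x)" if "x \<in> \<Omega>" for x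
    unfolding Gd_def using gd op that
    by (simp add: differentiable_on_eq_differentiable_at frechet_derivative_works[symmetric])
  have KC: "dirac (\<lambda>y. cvec (g y)) x = csc (g x \<bullet> g x + 2 * (g x \<bullet> h x))" if x: "x \<in> \<Omega>" for x
  proof -
    have hx: "\<And>j. has_partial (\<lambda>y. cvec (h y)) j x"
      "dirac (\<lambda>y. cvec (h y)) x + cmult (cvec (h x)) (cvec (h x)) = csc (v x)"
      using rh x unfolding riccati_solution_def by auto
    have "(\<forall>j. has_partial (\<lambda>y. cvec (g y + h y)) j x) \<and>
      dirac (\<lambda>y. cvec (g y + h y)) x + cmult (cvec (g x + h x)) (cvec (g x + h x)) = csc (v x)"
      using rgh x unfolding riccati_solution_def by auto
    with KC_equiv[where v=v and h=h and x=x, OF hx GD[OF x]] show ?thesis by blast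
  qed
  have W: "dirac (\<lambda>y. cvec (g y)) x = (\<Sum>j\<in>UNIV. cmult (cgen j) (cvec (Gd x (axis j 1))))"
    if "x \<in> \<Omega>" for x
    by (rule dirac_frechet(2)[OF GD[OF that]])
  have symm: "Gd x (axis j 1) $ k = Gd x (axis k 1) $ j" if x: "x \<in> \<Omega>" for x j k
  proof -
    have biv: "Gd x (axis j 1) $ k = Gd x (axis k 1) $ j" if jk: "j < k" for j k
    proof -
      have "(\<Sum>i\<in>UNIV. cmult (bas {i}) (cvec (Gd x (axis i 1)))) $ {j, k} = 0"
        using KC[OF x] W[OF x] jk by (simp add: cgen_bas csc_comp_biv)
      then show ?thesis using dirac_sum_biv[OF jk, of "\<lambda>i. Gd x (axis i 1)"] by simp
    qed
    show ?thesis
    proof (cases j k rule: linorder_cases)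
      case less then show ?thesis by (rule biv)
    next
      case equal then show ?thesis by simp
    next
      case greater then show ?thesis using biv[OF greater] by simp
    qed
  qed
  have sd: "symder g \<Omega>"
    unfolding symder_def
  proof
    fix x assume x: "x \<in> \<Omega>"
    have lin: "linear (Gd x)" using GD[OF x] by (simp add: has_derivative_linear)
    show "\<exists>D. (g has_derivative D) (at x) \<and> (\<forall>u w. D u \<bullet> w = D w \<bullet> u)"
      using GD[OF x] sym_from_partials[OF lin symm[OF x]] by blast
  qed
  interpret closed_form \<Omega> g by unfold_locales (fact op, fact sd)
  obtain \<psi> where \<psi>: "potential g \<psi> \<Omega>" using global_potential[OF sc] by blast
  define \<phi> where "\<phi> y = exp (\<psi> y)" for y
  have d\<phi>: "(\<phi> has_derivative (\<lambda>h. \<phi> y * (g y \<bullet> h))) (at y)" if "y \<in> \<Omega>" for y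
  proof -
    have "(\<psi> has_derivative (\<lambda>h. g y \<bullet> h)) (at y)" using \<psi> that unfolding potential_def by blast
    then show ?thesis unfolding \<phi>_def by (auto intro!: derivative_eq_intros)
  qed
  have cp: "has_partial (cscf \<phi>) j y" "cpartial (cscf \<phi>) j y = csc (\<phi> y * g y $ j)" if y: "y \<in> \<Omega>" for y j
  proof -
    have "(cscf \<phi> has_derivative (\<lambda>h. csc (\<phi> y * (g y \<bullet> h)))) (at y)"
      unfolding cscf_def[abs_def] by (rule bounded_linear.has_derivative[OF bounded_linear_csc d\<phi>[OF y]])
    from frechet_partial[OF this] show "has_partial (cscf \<phi>) j y" "cpartial (cscf \<phi>) j y = csc (\<phi> y * g y $ j)"
      by (simp_all add: inner_axis)
  qed
  have dsc: "dirac (cscf \<phi>) y = \<phi> y *\<^sub>R cvec (g y)" if y: "y \<in> \<Omega>" for y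
    unfolding dirac_def cp(2)[OF y] cmult_gen_csc by (rule cvec_sum_gen)
  have nz: "\<phi> x \<noteq> 0" for x unfolding \<phi>_def by simp
  have aux: "aux_solution \<Omega> h \<phi>"
    unfolding aux_solution_def
  proof (intro ballI conjI allI)
    fix x j assume x: "x \<in> \<Omega>"
    show "has_partial (cscf \<phi>) j x" by (rule cp(1)[OF x])
  next
    fix x assume x: "x \<in> \<Omega>"
    have dR: "((\<lambda>y. \<phi> y *\<^sub>R cvec (g y)) has_derivative
        (\<lambda>k. (\<phi> x * (g x \<bullet> k)) *\<^sub>R cvec (g x) + \<phi> x *\<^sub>R cvec (Gd x k))) (at x)"
      using d\<phi>[OF x] bounded_linear.has_derivative[OF bounded_linear_cvec GD[OF x]]
      by (auto intro!: derivative_eq_intros)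
    have pc: "has_partial (dirac (cscf \<phi>)) j x = has_partial (\<lambda>y. \<phi> y *\<^sub>R cvec (g y)) j x"
      "cpartial (dirac (cscf \<phi>)) j x = cpartial (\<lambda>y. \<phi> y *\<^sub>R cvec (g y)) j x" for j
      using partial_cong[OF op x dsc] by auto
    have pd: "has_partial (dirac (cscf \<phi>)) j x"
      "cpartial (dirac (cscf \<phi>)) j x = (\<phi> x * g x $ j) *\<^sub>R cvec (g x) + \<phi> x *\<^sub>R cvec (Gd x (axis j 1))" for j
      unfolding pc using frechet_partial[OF dR] by (simp_all add: inner_axis)
    show "has_partial (dirac (cscf \<phi>)) j x" for j by (rule pd(1))
    have "dirac (dirac (cscf \<phi>)) x =
        \<phi> x *\<^sub>R (\<Sum>j\<in>UNIV. (g x $ j) *\<^sub>R cmult (cgen j) (cvec (g x))) +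
        \<phi> x *\<^sub>R (\<Sum>j\<in>UNIV. cmult (cgen j) (cvec (Gd x (axis j 1))))"
      unfolding dirac_def pd(2) cmult_add_right cmult_scale_right sum.distrib scaleR_sum_right scaleR_scaleR
      by (simp add: mult.commute)
    also have "\<dots> = \<phi> x *\<^sub>R (cmult (cvec (g x)) (cvec (g x)) + dirac (\<lambda>y. cvec (g y)) x)"
      unfolding W[OF x] cmult_cvec_left scaleR_add_right ..
    also have "\<dots> = csc (\<phi> x * (2 * (g x \<bullet> h x)))"
      unfolding KC[OF x] cmult_cvec_self csc_add csc_scale by (simp add: algebra_simps)
    finally have "claplace \<phi> x = csc (- (\<phi> x * (2 * (g x \<bullet> h x))))"
      unfolding claplace_def by (simp add: csc_uminus)
    moreover have "cinner (dirac (cscf \<phi>) x) (cvec (h x)) = \<phi> x * (g x \<bullet> h x)"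
      unfolding dsc[OF x] cvec_scale[symmetric] cinner_cvec by simp
    ultimately show "claplace \<phi> x + csc (2 * cinner (dirac (cscf \<phi>) x) (cvec (h x))) = 0"
      by (simp add: csc_add csc_zero algebra_simps)
  qed
  have "cvec (g x) = (1 / \<phi> x) *\<^sub>R dirac (cscf \<phi>) x" if "x \<in> \<Omega>" for x
    using dsc[OF that] nz[of x] by simp
  then show ?thesis using aux nz by blast
qed


lemma reverse:
  fixes \<Omega> :: "('n::{finite,linorder}) rvec set"
    and v :: "'n rvec \<Rightarrow> real"
    and h g :: "'n rvec \<Rightarrow> 'n rvec"
  assumes op: "open \<Omega>"
    and rh: "riccati_solution \<Omega> v h"
    and gd: "g differentiable_on \<Omega>"
    and aux: "aux_solution \<Omega> h \<phi>" and nz: "\<forall>x\<in>\<Omega>. \<phi> x \<noteq> 0"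
    and eqg: "\<forall>x\<in>\<Omega>. cvec (g x) = (1 / \<phi> x) *\<^sub>R dirac (cscf \<phi>) x"
  shows "riccati_solution \<Omega> v (\<lambda>x. g x + h x)"
  unfolding riccati_solution_def
proof
  fix x assume x: "x \<in> \<Omega>"
  define Gd where "Gd x = frechet_derivative g (at x)" for x
  have GD: "(g has_derivative Gd x) (at x)"
    unfolding Gd_def using gd op x
    by (simp add: differentiable_on_eq_differentiable_at frechet_derivative_works[symmetric])
  have hx: "\<And>j. has_partial (\<lambda>y. cvec (h y)) j x"
    "dirac (\<lambda>y. cvec (h y)) x + cmult (cvec (h x)) (cvec (h x)) = csc (v x)"
    using rh x unfolding riccati_solution_def by auto
  define p where "p j y = cpartial (cscf \<phi>) j y $ {}" for j y
  define d where "d y = (\<chi> j. p j y)" for y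
  have cp: "has_partial (cscf \<phi>) j y" if "y \<in> \<Omega>" for j y
    using aux that unfolding aux_solution_def by blast
  have cpc: "cpartial (cscf \<phi>) j y = csc (p j y)" if y: "y \<in> \<Omega>" for j y
  proof -
    have "cpartial (cscf \<phi>) j y $ A = 0" if A: "A \<noteq> {}" for A
    proof -
      have "cpartial (\<lambda>z. cscf \<phi> z $ A) j y = cpartial (cscf \<phi>) j y $ A"
        by (rule partial_linear(2)[OF bounded_linear_vec_nth cp[OF y]])
      moreover have "(\<lambda>z. cscf \<phi> z $ A) = (\<lambda>z. 0)" using A by (simp add: cscf_def csc_def)
      moreover have "cpartial (\<lambda>z. 0::real) j y = 0"
        by (rule vd_partial(2)) (rule has_vector_derivative_const)
      ultimately show ?thesis by simp
    qed
    then show ?thesis by (simp add: vec_eq_iff csc_def p_def)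
  qed
  have phip: "has_partial \<phi> j y" "cpartial \<phi> j y = p j y" if y: "y \<in> \<Omega>" for j y
  proof -
    have e: "(\<lambda>z. cscf \<phi> z $ {}) = \<phi>" by (simp add: cscf_def csc_def)
    show "has_partial \<phi> j y" "cpartial \<phi> j y = p j y"
      using partial_linear[OF bounded_linear_vec_nth cp[OF y], of "{}"] unfolding e p_def by auto
  qed
  have Ud: "dirac (cscf \<phi>) y = cvec (d y)" if y: "y \<in> \<Omega>" for y
    unfolding dirac_def cpc[OF y] cmult_gen_csc cvec_def d_def by simp
  have gx: "g x = (1 / \<phi> x) *\<^sub>R d x"
    using eqg x Ud[OF x] by (metis cvec_inj cvec_scale)
  define U where "U = dirac (cscf \<phi>)"
  have Up: "has_partial U j x" for j using aux x unfolding aux_solution_def U_def by blast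
  have cg: "cpartial (\<lambda>y. cvec (g y)) j x = (1 / \<phi> x) *\<^sub>R cpartial U j x + (- p j x / (\<phi> x)^2) *\<^sub>R U x" for j
  proof -
    have "cpartial (\<lambda>y. cvec (g y)) j x = cpartial (\<lambda>y. (1 / \<phi> y) *\<^sub>R U y) j x"
      using partial_cong(2)[OF op x, of "\<lambda>y. cvec (g y)" "\<lambda>y. (1 / \<phi> y) *\<^sub>R U y"] eqg unfolding U_def by auto
    also have "\<dots> = (1 / \<phi> x) *\<^sub>R cpartial U j x + (- p j x / (\<phi> x)^2) *\<^sub>R U x"
    proof (rule vd_partial(2))
      have a: "((\<lambda>t. \<phi> (x + t *\<^sub>R axis j 1)) has_real_derivative p j x) (at 0)"
        using has_partial_vd[OF phip(1)[OF x]] phip(2)[OF x]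
        by (simp add: has_real_derivative_iff_has_vector_derivative)
      have a0: "\<phi> (x + 0 *\<^sub>R axis j 1) \<noteq> 0" using nz x by simp
      have inv: "((\<lambda>t. 1 / \<phi> (x + t *\<^sub>R axis j 1)) has_real_derivative (- p j x / (\<phi> x)^2)) (at 0)"
        using DERIV_inverse_fun[OF a a0] by (simp add: divide_inverse power2_eq_square)
      have u: "((\<lambda>t. U (x + t *\<^sub>R axis j 1)) has_vector_derivative cpartial U j x) (at 0)"
        by (rule has_partial_vd[OF Up])
      show "((\<lambda>t. (1 / \<phi> (x + t *\<^sub>R axis j 1)) *\<^sub>R U (x + t *\<^sub>R axis j 1)) has_vector_derivative
          (1 / \<phi> x) *\<^sub>R cpartial U j x + (- p j x / (\<phi> x)^2) *\<^sub>R U x) (at 0)"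
        using has_vector_derivative_scaleR[OF inv u] by simp
    qed
    finally show ?thesis .
  qed
  have lap: "dirac U x = csc (2 * (d x \<bullet> h x))"
  proof -
    have "claplace \<phi> x + csc (2 * cinner (U x) (cvec (h x))) = 0"
      using aux x unfolding aux_solution_def U_def by blast
    then have "dirac U x = csc (2 * cinner (U x) (cvec (h x)))"
      unfolding claplace_def U_def by (simp add: add_eq_0_iff2)
    then show ?thesis unfolding U_def Ud[OF x] cinner_cvec .
  qed
  have "dirac (\<lambda>y. cvec (g y)) x =
      (1 / \<phi> x) *\<^sub>R dirac U x + (- 1 / (\<phi> x)^2) *\<^sub>R (\<Sum>j\<in>UNIV. p j x *\<^sub>R cmult (cgen j) (U x))"
    unfolding dirac_def cg cmult_add_right cmult_scale_right sum.distrib scaleR_sum_right scaleR_scaleR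
    by simp
  also have "(\<Sum>j\<in>UNIV. p j x *\<^sub>R cmult (cgen j) (U x)) = cmult (cvec (d x)) (U x)"
    unfolding cmult_cvec_left d_def by simp
  also have "cmult (cvec (d x)) (U x) = csc (- (d x \<bullet> d x))"
    unfolding U_def Ud[OF x] by (rule cmult_cvec_self)
  finally have W: "dirac (\<lambda>y. cvec (g y)) x = csc ((1 / \<phi> x) * (2 * (d x \<bullet> h x)) + (- 1 / (\<phi> x)^2) * (- (d x \<bullet> d x)))"
    unfolding lap csc_scale csc_add .
  have KC: "dirac (\<lambda>y. cvec (g y)) x = csc (g x \<bullet> g x + 2 * (g x \<bullet> h x))"
    unfolding W gx using nz x by (simp add: field_simps power2_eq_square)
  show "(\<forall>j. has_partial (\<lambda>y. cvec (g y + h y)) j x) \<and>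
      dirac (\<lambda>y. cvec (g y + h y)) x + cmult (cvec (g x + h x)) (cvec (g x + h x)) = csc (v x)"
    using KC_equiv[where v=v and h=h and x=x, OF hx GD] KC by blast
qed


theorem proposition5p1:
  fixes \<Omega> :: "('n::{finite,linorder}) rvec set"
    and v :: "'n rvec \<Rightarrow> real"
    and h g :: "'n rvec \<Rightarrow> 'n rvec"
  assumes "CARD('n) > 1"
    and "open \<Omega>" and "connected \<Omega>" and "\<Omega> \<noteq> {}" and "simply_connected \<Omega>"
    and "riccati_solution \<Omega> v h"
    and "g differentiable_on \<Omega>"
  shows "riccati_solution \<Omega> v (\<lambda>x. g x + h x) \<longleftrightarrow>
    (\<exists>\<phi>. aux_solution \<Omega> h \<phi> \<and> (\<forall>x\<in>\<Omega>. \<phi> x \<noteq> 0) \<and>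
         (\<forall>x\<in>\<Omega>. cvec (g x) = (1 / \<phi> x) *\<^sub>R dirac (cscf \<phi>) x))"
proof
  assume "riccati_solution \<Omega> v (\<lambda>x. g x + h x)"
  then show "\<exists>\<phi>. aux_solution \<Omega> h \<phi> \<and> (\<forall>x\<in>\<Omega>. \<phi> x \<noteq> 0) \<and>
         (\<forall>x\<in>\<Omega>. cvec (g x) = (1 / \<phi> x) *\<^sub>R dirac (cscf \<phi>) x)"
    using forward[OF assms(2,5,6,7)] by blast
next
  assume "\<exists>\<phi>. aux_solution \<Omega> h \<phi> \<and> (\<forall>x\<in>\<Omega>. \<phi> x \<noteq> 0) \<and>
         (\<forall>x\<in>\<Omega>. cvec (g x) = (1 / \<phi> x) *\<^sub>R dirac (cscf \<phi>) x)"
  then obtain \<phi> where "aux_solution \<Omega> h \<phi>" "\<forall>x\<in>\<Omega>. \<phi> x \<noteq> 0"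
    "\<forall>x\<in>\<Omega>. cvec (g x) = (1 / \<phi> x) *\<^sub>R dirac (cscf \<phi>) x" by blast
  then show "riccati_solution \<Omega> v (\<lambda>x. g x + h x)"
    using reverse[OF assms(2,6,7)] by blast
qed


end
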